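(* Let $n,k,\ell,\ell',t$ be integers with $n\ge 2$ and $k\ge \ell\ge \ell'\ge t\ge 1$. Let $[m]=X_1\cup\dots\cup X_k$ with the $X_i$ pairwise disjoint, $|X_i|=n$, and let $v_i$ be the smallest element of $X_i$. Define $\mathcal{F}_0=\{F\in\mathcal{H}(n,k,\ell): |F\cap\{v_1,\dots,v_{\ell'}\}|\ge t\}$ and $\mathcal{G}_0=\{\{v_1,\dots,v_{\ell'}\}\}$, and for every integer $a\ge 1$ define $\mathcal{F}_a=\{F\in\mathcal{H}(n,k,\ell): \{v_1,\dots,v_a\}\subseteq F\}$ and $\mathcal{G}_a=\{G\in\mathcal{H}(n,k,\ell'): |G\cap\{v_1,\dots,v_a\}|\ge t\}$. If $\mathcal{F}\subseteq\mathcal{H}(n,k,\ell)$ and $\mathcal{G}\subseteq\mathcal{H}(n,k,\ell')$ are both non-empty and cross $t$-intersecting, then $$|\mathcal{F}|+|\mathcal{G}|\le \max\Big\{|\mathcal{F}_0|+|\mathcal{G}_0|,\ \max_{a\in[\ell'+1,\ell]}\{|\mathcal{F}_a|+|\mathcal{G}_a|\}\Big\},$$ where the inner maximum is omitted if $\ell=\ell'$.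
   Context: For integers $p\le q$, $[p,q]=\{p,p+1,\dots,q\}$ and $[q]=[1,q]$. Here $m=kn$ and the elements of $[m]$ carry their natural order. For $\ell\in[k]$, $\mathcal{H}(n,k,\ell)=\{H\subseteq[m]: |H|=\ell,\ |H\cap X_i|\le 1 \text{ for all } i\in[k]\}$. Two families $\mathcal{F},\mathcal{G}$ are cross $t$-intersecting if $|F\cap G|\ge t$ for all $F\in\mathcal{F}$, $G\in\mathcal{G}$. *)

theory Defs
  imports Main
begin

definition Hfam :: "(nat \<Rightarrow> nat set) \<Rightarrow> nat \<Rightarrow> nat \<Rightarrow> nat \<Rightarrow> nat set set" where
  "Hfam X n k l = {H. H \<subseteq> {1..k*n} \<and> card H = l \<and> (\<forall>i\<in>{1..k}. card (H \<inter> X i) \<le> 1)}"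

definition cross_t_intersecting :: "nat \<Rightarrow> 'a set set \<Rightarrow> 'a set set \<Rightarrow> bool" where
  "cross_t_intersecting t \<F> \<G> \<longleftrightarrow> (\<forall>F\<in>\<F>. \<forall>G\<in>\<G>. t \<le> card (F \<inter> G))"

definition Vset :: "(nat \<Rightarrow> nat set) \<Rightarrow> nat \<Rightarrow> nat set" where
  "Vset X a = (\<lambda>i. Min (X i)) ` {1..a}"

end

theory Submission
  imports Defs
begin

locale PT =
  fixes X :: "nat \<Rightarrow> nat set" and n k :: nat
  assumes n2: "n \<ge> 2"
    and cover: "(\<Union>i\<in>{1..k}. X i) = {1..k*n}"
    and disj: "\<forall>i\<in>{1..k}. \<forall>j\<in>{1..k}. i \<noteq> j \<longrightarrow> X i \<inter> X j = {}"
    and cardX: "\<forall>i\<in>{1..k}. card (X i) = n"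
begin

abbreviation H where "H p \<equiv> Hfam X n k p"

definition supp :: "nat set \<Rightarrow> nat set" where
  "supp Z = {i\<in>{1..k}. Z \<inter> X i \<noteq> {}}"

definition aut :: "(nat \<Rightarrow> nat) \<Rightarrow> bool" where
  "aut \<sigma> \<longleftrightarrow> (\<forall>x. \<sigma> (\<sigma> x) = x) \<and> (\<forall>i\<in>{1..k}. \<exists>j\<in>{1..k}. \<sigma> ` X i = X j)"

lemma finX: "i \<in> {1..k} \<Longrightarrow> finite (X i)"
  using cardX n2 card.infinite by fastforce

lemma cardXi: "i \<in> {1..k} \<Longrightarrow> card (X i) = n"
  using cardX by blast

lemma Xsub: "i \<in> {1..k} \<Longrightarrow> X i \<subseteq> {1..k*n}"
  using cover by blast

lemma part_ex: "x \<in> {1..k*n} \<Longrightarrow> \<exists>i\<in>{1..k}. x \<in> X i"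
  using cover by blast

lemma part_uniq: "x \<in> X i \<Longrightarrow> x \<in> X j \<Longrightarrow> i \<in> {1..k} \<Longrightarrow> j \<in> {1..k} \<Longrightarrow> i = j"
  using disj by blast

lemma disjI: "i \<in> {1..k} \<Longrightarrow> j \<in> {1..k} \<Longrightarrow> i \<noteq> j \<Longrightarrow> X i \<inter> X j = {}"
  using disj by blast

lemma other_elem: "i \<in> {1..k} \<Longrightarrow> \<exists>y\<in>X i. y \<noteq> x"
proof -
  assume i: "i \<in> {1..k}"
  show ?thesis
  proof (rule ccontr)
    assume "\<not> (\<exists>y\<in>X i. y \<noteq> x)"
    then have "X i \<subseteq> {x}" by blast
    then have "card (X i) \<le> card {x}" by (intro card_mono) auto
    then have "card (X i) \<le> 1" by simp
    then show False using cardXi[OF i] n2 by simp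
  qed
qed

lemma X_ne: "i \<in> {1..k} \<Longrightarrow> X i \<noteq> {}"
  using other_elem by blast

lemma H_sub: "F \<in> H p \<Longrightarrow> F \<subseteq> {1..k*n}"
  unfolding Hfam_def by blast

lemma H_fin: "F \<in> H p \<Longrightarrow> finite F"
  using H_sub finite_subset by blast

lemma H_card: "F \<in> H p \<Longrightarrow> card F = p"
  unfolding Hfam_def by blast

lemma H_part: "F \<in> H p \<Longrightarrow> i \<in> {1..k} \<Longrightarrow> card (F \<inter> X i) \<le> 1"
  unfolding Hfam_def by blast

lemma H_finite: "finite (H p)"
proof -
  have "H p \<subseteq> Pow {1..k*n}" unfolding Hfam_def by blast
  then show ?thesis by (rule finite_subset) simp
qed

lemma single: "F \<in> H p \<Longrightarrow> i \<in> {1..k} \<Longrightarrow> F \<inter> X i \<noteq> {} \<Longrightarrow> \<exists>e. F \<inter> X i = {e}"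
proof -
  assume a: "F \<in> H p" "i \<in> {1..k}" "F \<inter> X i \<noteq> {}"
  then obtain x where x: "x \<in> F \<inter> X i" by blast
  have "finite (F \<inter> X i)" using H_fin[OF a(1)] by simp
  moreover have "card (F \<inter> X i) \<le> Suc 0" using H_part[OF a(1,2)] by simp
  ultimately have "\<forall>a\<in>F \<inter> X i. \<forall>b\<in>F \<inter> X i. a = b" using card_le_Suc0_iff_eq by blast
  then have "F \<inter> X i = {x}" using x by blast
  then show ?thesis by blast
qed

lemma single_eq: "F \<in> H p \<Longrightarrow> i \<in> {1..k} \<Longrightarrow> x \<in> F \<Longrightarrow> x \<in> X i \<Longrightarrow> F \<inter> X i = {x}"
  by (metis IntI empty_iff single singletonD)

lemma n2_eq: "n = 2 \<Longrightarrow> i \<in> {1..k} \<Longrightarrow> x \<in> X i \<Longrightarrow> y \<in> X i \<Longrightarrow> z \<in> X i \<Longrightarrow> x \<noteq> z \<Longrightarrow> y \<noteq> z \<Longrightarrow> x = y"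
proof -
  assume a: "n = 2" "i \<in> {1..k}" "x \<in> X i" "y \<in> X i" "z \<in> X i" "x \<noteq> z" "y \<noteq> z"
  show "x = y"
  proof (rule ccontr)
    assume "x \<noteq> y"
    then have "{x,y,z} \<subseteq> X i" "card {x,y,z} = 3" using a by auto
    then have "3 \<le> card (X i)" using finX[OF a(2)] by (metis card_mono)
    then show False using cardXi[OF a(2)] a(1) by simp
  qed
qed

lemma card_parts: "Z \<subseteq> {1..k*n} \<Longrightarrow> card Z = (\<Sum>i\<in>{1..k}. card (Z \<inter> X i))"
proof -
  assume Z: "Z \<subseteq> {1..k*n}"
  have "Z = (\<Union>i\<in>{1..k}. Z \<inter> X i)" using Z cover by blast
  moreover have "card (\<Union>i\<in>{1..k}. Z \<inter> X i) = (\<Sum>i\<in>{1..k}. card (Z \<inter> X i))"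
    by (rule card_UN_disjoint) (use finX disj in auto)
  ultimately show ?thesis by simp
qed

lemma card_parts_eq: "Z \<subseteq> {1..k*n} \<Longrightarrow> W \<subseteq> {1..k*n} \<Longrightarrow> (\<And>i. i \<in> {1..k} \<Longrightarrow> card (Z \<inter> X i) = card (W \<inter> X i)) \<Longrightarrow> card Z = card W"
  using card_parts by (metis (no_types, lifting) sum.cong)

lemma eq_parts: "Z \<subseteq> {1..k*n} \<Longrightarrow> W \<subseteq> {1..k*n} \<Longrightarrow> (\<And>i. i \<in> {1..k} \<Longrightarrow> Z \<inter> X i = W \<inter> X i) \<Longrightarrow> Z = W"
proof -
  assume a: "Z \<subseteq> {1..k*n}" "W \<subseteq> {1..k*n}" "\<And>i. i \<in> {1..k} \<Longrightarrow> Z \<inter> X i = W \<inter> X i"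
  show "Z = W"
  proof
    show "Z \<subseteq> W" using a part_ex by blast
    show "W \<subseteq> Z" using a part_ex by blast
  qed
qed

lemma card_supp: "F \<in> H p \<Longrightarrow> card (supp F) = p"
proof -
  assume F: "F \<in> H p"
  have "p = (\<Sum>i\<in>{1..k}. card (F \<inter> X i))" using card_parts[OF H_sub[OF F]] H_card[OF F] by simp
  also have "\<dots> = (\<Sum>i\<in>{1..k}. if F \<inter> X i \<noteq> {} then 1 else 0)"
  proof (rule sum.cong)
    fix i assume i: "i \<in> {1..k}"
    show "card (F \<inter> X i) = (if F \<inter> X i \<noteq> {} then 1 else 0)"
    proof (cases "F \<inter> X i = {}")
      case False
      then obtain e where "F \<inter> X i = {e}" using single[OF F i] by blast
      then show ?thesis by simp
    qed simp
  qed simp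
  also have "\<dots> = card (supp F)"
    unfolding supp_def by (simp add: sum.inter_filter[symmetric])
  finally show ?thesis by simp
qed

lemma supp_sub: "supp F \<subseteq> {1..k}" unfolding supp_def by blast

end

definition tr :: "nat \<Rightarrow> nat \<Rightarrow> nat \<Rightarrow> nat" where
  "tr x y = (\<lambda>z. if z = x then y else if z = y then x else z)"

lemma tr_invol: "tr x y (tr x y z) = z"
  unfolding tr_def by auto

lemma tr_fix: "x \<notin> F \<Longrightarrow> y \<notin> F \<Longrightarrow> tr x y ` F = F"
proof -
  assume a: "x \<notin> F" "y \<notin> F"
  have "tr x y ` F = id ` F" by (rule image_cong) (use a in \<open>auto simp: tr_def\<close>)
  then show ?thesis by simp
qed

lemma tr_move: "x \<in> F \<Longrightarrow> y \<notin> F \<Longrightarrow> tr x y ` F = (F - {x}) \<union> {y}"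
proof -
  assume a: "x \<in> F" "y \<notin> F"
  have "F = insert x (F - {x})" using a by blast
  then have "tr x y ` F = insert (tr x y x) (tr x y ` (F - {x}))" by (metis image_insert)
  also have "tr x y ` (F - {x}) = F - {x}" by (rule tr_fix) (use a in auto)
  also have "tr x y x = y" by (simp add: tr_def)
  finally show ?thesis by blast
qed

lemma inv_img: "(\<forall>x. \<sigma> (\<sigma> x) = x) \<Longrightarrow> \<sigma> ` (\<sigma> ` F) = F"
  by (simp add: image_image)

lemma invol_inj: assumes a: "\<forall>x. \<sigma> (\<sigma> x) = x" shows "inj \<sigma>"
proof (rule injI)
  fix x y assume "\<sigma> x = \<sigma> y"
  then have "\<sigma> (\<sigma> x) = \<sigma> (\<sigma> y)" by simp
  then show "x = y" using a by simp
qed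

context PT
begin

lemma aut_inv_all: "aut \<sigma> \<Longrightarrow> \<forall>x. \<sigma> (\<sigma> x) = x"
  unfolding aut_def by (elim conjE)

lemma aut_invol: "aut \<sigma> \<Longrightarrow> \<sigma> (\<sigma> x) = x"
  using aut_inv_all by simp

lemma aut_inj: "aut \<sigma> \<Longrightarrow> inj \<sigma>"
  by (rule invol_inj[OF aut_inv_all])

lemma aut_img_img: "aut \<sigma> \<Longrightarrow> \<sigma> ` (\<sigma> ` F) = F"
  by (rule inv_img[OF aut_inv_all])

lemma aut_card_int: "aut \<sigma> \<Longrightarrow> card (\<sigma> ` F \<inter> \<sigma> ` G) = card (F \<inter> G)"
proof -
  assume a: "aut \<sigma>"
  have "\<sigma> ` F \<inter> \<sigma> ` G = \<sigma> ` (F \<inter> G)" using aut_inj[OF a] by (simp add: image_Int)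
  moreover have "inj_on \<sigma> (F \<inter> G)" using inj_on_subset[OF aut_inj[OF a] subset_UNIV] .
  ultimately show ?thesis by (simp add: card_image)
qed

lemma aut_card: assumes a: "aut \<sigma>" shows "card (\<sigma> ` F) = card F"
proof -
  have "inj_on \<sigma> F" using inj_on_subset[OF aut_inj[OF a] subset_UNIV] .
  then show ?thesis by (simp add: card_image)
qed

lemma aut_H: assumes a: "aut \<sigma>" and F: "F \<in> H p" shows "\<sigma> ` F \<in> H p"
proof -
  have sub: "\<sigma> ` F \<subseteq> {1..k*n}"
  proof
    fix y assume "y \<in> \<sigma> ` F"
    then obtain x where x: "x \<in> F" "y = \<sigma> x" by blast
    then obtain i where i: "i \<in> {1..k}" "x \<in> X i" using H_sub[OF F] part_ex by blast
    then obtain j where "j \<in> {1..k}" "\<sigma> ` X i = X j" using a unfolding aut_def by blast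
    then show "y \<in> {1..k*n}" using x i Xsub by blast
  qed
  have parts: "card (\<sigma> ` F \<inter> X j) \<le> 1" if j: "j \<in> {1..k}" for j
  proof -
    obtain i where i: "i \<in> {1..k}" "\<sigma> ` X j = X i" using a j unfolding aut_def by blast
    have "\<sigma> ` F \<inter> X j = \<sigma> ` (F \<inter> X i)"
    proof -
      have "X j = \<sigma> ` X i" using i aut_img_img[OF a, of "X j"] by simp
      then show ?thesis using aut_inj[OF a] by (simp add: image_Int)
    qed
    moreover have "card (\<sigma> ` (F \<inter> X i)) \<le> card (F \<inter> X i)"
      by (rule card_image_le) (use H_fin[OF F] in simp)
    ultimately have "card (\<sigma> ` F \<inter> X j) \<le> card (F \<inter> X i)" by simp
    then show ?thesis using H_part[OF F i(1)] by simp
  qed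
  have "card (\<sigma> ` F) = p" using aut_card[OF a] H_card[OF F] by simp
  then show ?thesis unfolding Hfam_def using sub parts by blast
qed

lemma tr_aut: assumes "i \<in> {1..k}" "x \<in> X i" "y \<in> X i" shows "aut (tr x y)"
  unfolding aut_def
proof (intro conjI ballI allI)
  fix z show "tr x y (tr x y z) = z" by (rule tr_invol)
next
  fix j assume j: "j \<in> {1..k}"
  show "\<exists>j'\<in>{1..k}. tr x y ` X j = X j'"
  proof (cases "j = i")
    case True
    have "tr x y ` X i = X i"
    proof
      show "tr x y ` X i \<subseteq> X i" using assms unfolding tr_def by auto
      show "X i \<subseteq> tr x y ` X i"
      proof
        fix z assume "z \<in> X i"
        then have "tr x y z \<in> X i" using assms unfolding tr_def by auto
        then show "z \<in> tr x y ` X i" using tr_invol by (metis image_eqI)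
      qed
    qed
    then show ?thesis using True j by blast
  next
    case False
    then have "x \<notin> X j" "y \<notin> X j" using assms j disj by blast+
    then have "tr x y ` X j = X j" by (rule tr_fix)
    then show ?thesis using j by blast
  qed
qed


lemma pswap: assumes h: "h \<in> {1..k}" and i: "i \<in> {1..k}" and hi: "h \<noteq> i"
  and d: "d \<in> X h" and w: "w \<in> X i"
  shows "\<exists>\<sigma>. aut \<sigma> \<and> \<sigma> d = w \<and> (\<forall>z. z \<notin> X h \<union> X i \<longrightarrow> \<sigma> z = z)
      \<and> (\<forall>z\<in>X h. \<sigma> z \<in> X i) \<and> (\<forall>z\<in>X i. \<sigma> z \<in> X h)"
proof -
  have dj: "X h \<inter> X i = {}" using disj h i hi by blast
  have fh: "finite (X h - {d})" using finite_Diff[OF finX[OF h]] .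
  have fi: "finite (X i - {w})" using finite_Diff[OF finX[OF i]] .
  have "card (X h - {d}) = card (X h) - 1" using card_Diff_singleton[OF d] .
  also have "\<dots> = card (X i) - 1" using cardXi[OF h] cardXi[OF i] by simp
  also have "\<dots> = card (X i - {w})" using card_Diff_singleton[OF w] by simp
  finally have "card (X h - {d}) = card (X i - {w})" .
  then obtain f where f: "bij_betw f (X h - {d}) (X i - {w})" using finite_same_card_bij[OF fh fi] by blast
  define \<beta> where "\<beta> = f(d := w)"
  have bb: "bij_betw \<beta> (X h) (X i)"
  proof -
    have "bij_betw \<beta> (X h - {d}) (X i - {w}) = bij_betw f (X h - {d}) (X i - {w})"
      unfolding \<beta>_def by (rule bij_betw_cong) simp
    then have "bij_betw \<beta> (X h - {d}) (X i - {w})" using f by simp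
    then have "bij_betw \<beta> ((X h - {d}) \<union> {d}) ((X i - {w}) \<union> {\<beta> d})"
      by (intro notIn_Un_bij_betw) (auto simp: \<beta>_def)
    moreover have "(X h - {d}) \<union> {d} = X h" "(X i - {w}) \<union> {\<beta> d} = X i" using d w by (auto simp: \<beta>_def)
    ultimately show ?thesis by simp
  qed
  define g where "g = inv_into (X h) \<beta>"
  have gb: "bij_betw g (X i) (X h)" unfolding g_def using bb by (rule bij_betw_inv_into)
  define \<sigma> where "\<sigma> = (\<lambda>z. if z \<in> X h then \<beta> z else if z \<in> X i then g z else z)"
  have s1: "\<forall>z\<in>X h. \<sigma> z \<in> X i"
  proof
    fix z assume z: "z \<in> X h"
    then have "\<sigma> z = \<beta> z" unfolding \<sigma>_def by simp
    then show "\<sigma> z \<in> X i" using bb z bij_betwE by metis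
  qed
  have s2: "\<forall>z\<in>X i. \<sigma> z \<in> X h"
  proof
    fix z assume z: "z \<in> X i"
    then have "z \<notin> X h" using dj by blast
    then have "\<sigma> z = g z" unfolding \<sigma>_def using z by simp
    then show "\<sigma> z \<in> X h" using gb z bij_betwE by metis
  qed
  have inv: "\<sigma> (\<sigma> z) = z" for z
  proof (cases "z \<in> X h")
    case True
    then have "\<beta> z \<in> X i" using bb bij_betwE by blast
    then have "\<beta> z \<notin> X h" using dj by blast
    then show ?thesis unfolding \<sigma>_def g_def using True \<open>\<beta> z \<in> X i\<close> bb
      by (simp add: bij_betw_inv_into_left)
  next
    case False
    show ?thesis
    proof (cases "z \<in> X i")
      case True
      then have "g z \<in> X h" using gb bij_betwE by blast
      then show ?thesis unfolding \<sigma>_def g_def using True False bb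
        by (simp add: bij_betw_inv_into_right)
    next
      case False2: False
      then show ?thesis unfolding \<sigma>_def using False by simp
    qed
  qed
  have imgs: "\<exists>j'\<in>{1..k}. \<sigma> ` X j = X j'" if j: "j \<in> {1..k}" for j
  proof (cases "j = h")
    case True
    have "\<sigma> ` X h = \<beta> ` X h" unfolding \<sigma>_def by simp
    also have "\<dots> = X i" using bb by (simp add: bij_betw_def)
    finally show ?thesis using True i by blast
  next
    case False
    show ?thesis
    proof (cases "j = i")
      case True
      have "\<sigma> ` X i = g ` X i"
        by (rule image_cong) (use dj in \<open>auto simp: \<sigma>_def\<close>)
      also have "\<dots> = X h" using gb by (simp add: bij_betw_def)
      finally show ?thesis using True h by blast
    next
      case False2: False
      have "X j \<inter> X h = {}" "X j \<inter> X i = {}" using disj j h i False False2 by blast+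
      then have "\<sigma> ` X j = id ` X j"
        by (intro image_cong) (auto simp: \<sigma>_def)
      then have "\<sigma> ` X j = X j" by simp
      then show ?thesis using j by blast
    qed
  qed
  have A: "aut \<sigma>" unfolding aut_def
  proof (intro conjI allI ballI)
    fix z show "\<sigma> (\<sigma> z) = z" by (rule inv)
  next
    fix j assume "j \<in> {1..k}" then show "\<exists>j'\<in>{1..k}. \<sigma> ` X j = X j'" by (rule imgs)
  qed
  have B: "\<sigma> d = w" unfolding \<sigma>_def \<beta>_def using d by simp
  have C: "\<forall>z. z \<notin> X h \<union> X i \<longrightarrow> \<sigma> z = z" unfolding \<sigma>_def by simp
  show ?thesis by (rule exI[of _ \<sigma>]) (intro conjI A B C s1 s2)
qed

definition N :: "nat \<Rightarrow> nat \<Rightarrow> nat set \<Rightarrow> nat set set" where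
  "N t q F = {G \<in> H q. t \<le> card (G \<inter> F)}"

lemma N_fin: "finite (N t q F)"
  unfolding N_def using H_finite by simp

lemma aut_N: assumes a: "aut \<sigma>" shows "card (N t q (\<sigma> ` F)) = card (N t q F)"
proof -
  have "N t q (\<sigma> ` F) = (\<lambda>G. \<sigma> ` G) ` N t q F"
  proof
    show "(\<lambda>G. \<sigma> ` G) ` N t q F \<subseteq> N t q (\<sigma> ` F)"
    proof
      fix G' assume "G' \<in> (\<lambda>G. \<sigma> ` G) ` N t q F"
      then obtain G where G: "G \<in> N t q F" "G' = \<sigma> ` G" by blast
      then have "G \<in> H q" "t \<le> card (G \<inter> F)" unfolding N_def by auto
      then have "\<sigma> ` G \<in> H q" "t \<le> card (\<sigma> ` G \<inter> \<sigma> ` F)" using aut_H[OF a] aut_card_int[OF a] by auto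
      then show "G' \<in> N t q (\<sigma> ` F)" unfolding N_def using G(2) by blast
    qed
    show "N t q (\<sigma> ` F) \<subseteq> (\<lambda>G. \<sigma> ` G) ` N t q F"
    proof
      fix G assume G: "G \<in> N t q (\<sigma> ` F)"
      have G1: "G \<in> H q" "t \<le> card (G \<inter> \<sigma> ` F)" using G unfolding N_def by auto
      have "card (\<sigma> ` G \<inter> F) = card (\<sigma> ` G \<inter> \<sigma> ` (\<sigma> ` F))" using aut_img_img[OF a, of F] by simp
      also have "\<dots> = card (G \<inter> \<sigma> ` F)" by (rule aut_card_int[OF a])
      finally have "\<sigma> ` G \<in> H q \<and> t \<le> card (\<sigma> ` G \<inter> F)" using G1 aut_H[OF a] by simp
      then have "\<sigma> ` G \<in> N t q F" unfolding N_def by blast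
      moreover have "G = \<sigma> ` (\<sigma> ` G)" using aut_img_img[OF a] by simp
      ultimately show "G \<in> (\<lambda>G. \<sigma> ` G) ` N t q F" by blast
    qed
  qed
  moreover have "inj_on (\<lambda>G. \<sigma> ` G) (N t q F)"
    by (rule inj_onI) (metis aut_img_img[OF a])
  ultimately show ?thesis by (simp add: card_image)
qed

end

context PT
begin

definition ok :: "nat \<Rightarrow> nat \<Rightarrow> nat \<Rightarrow> nat set set \<Rightarrow> nat set set \<Rightarrow> bool" where
  "ok p q t A B \<longleftrightarrow> A \<subseteq> H p \<and> B \<subseteq> H q \<and> A \<noteq> {} \<and> B \<noteq> {} \<and> cross_t_intersecting t A B"

lemma ok_swap: assumes "ok p q t A B" shows "ok q p t B A"
proof -
  have "\<forall>F\<in>B. \<forall>G\<in>A. t \<le> card (F \<inter> G)"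
  proof (intro ballI)
    fix F G assume "F \<in> B" "G \<in> A"
    then have "t \<le> card (G \<inter> F)" using assms unfolding ok_def cross_t_intersecting_def by blast
    then show "t \<le> card (F \<inter> G)" by (simp add: Int_commute)
  qed
  then show ?thesis using assms unfolding ok_def cross_t_intersecting_def by blast
qed

lemma aut_fam_inj: "aut \<sigma> \<Longrightarrow> inj_on ((`) \<sigma>) S"
  by (rule inj_onI) (metis aut_img_img)

definition blk :: "nat set set \<Rightarrow> bool" where
  "blk A \<longleftrightarrow> (\<forall>\<sigma> K E. aut \<sigma> \<longrightarrow> K \<in> A \<longrightarrow> \<sigma> ` K = K \<longrightarrow> E \<in> A \<longrightarrow> \<sigma> ` E \<in> A)"

lemma blkD: assumes "blk A" "aut \<sigma>" "K \<in> A" "\<sigma> ` K = K" "E \<in> A" shows "\<sigma> ` E \<in> A"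
proof -
  have H: "\<forall>\<sigma> K E. aut \<sigma> \<longrightarrow> K \<in> A \<longrightarrow> \<sigma> ` K = K \<longrightarrow> E \<in> A \<longrightarrow> \<sigma> ` E \<in> A"
    using assms(1) unfolding blk_def .
  show ?thesis using H[rule_format, OF assms(2-5)] .
qed

lemma block:
  assumes ok: "ok p q t A B"
    and maxi: "\<And>A' B'. ok p q t A' B' \<Longrightarrow> card A' + card B' \<le> card A + card B"
    and mini: "\<And>A' B'. ok p q t A' B' \<Longrightarrow> card A' + card B' = card A + card B \<Longrightarrow> card A \<le> card A' \<and> card A \<le> card B'"
    and a: "aut \<sigma>" and K: "K \<in> A" "\<sigma> ` K = K" and E: "E \<in> A"
  shows "\<sigma> ` E \<in> A"
proof -
  define A' where "A' = (`) \<sigma> ` A"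
  define B' where "B' = (`) \<sigma> ` B"
  have AH: "A \<subseteq> H p" and BH: "B \<subseteq> H q" and Ane: "A \<noteq> {}" and Bne: "B \<noteq> {}"
    and cr: "\<And>F G. F \<in> A \<Longrightarrow> G \<in> B \<Longrightarrow> t \<le> card (F \<inter> G)"
    using ok unfolding ok_def cross_t_intersecting_def by auto
  have finA: "finite A" using AH H_finite finite_subset by blast
  have finB: "finite B" using BH H_finite finite_subset by blast
  have finA': "finite A'" unfolding A'_def using finA by simp
  have finB': "finite B'" unfolding B'_def using finB by simp
  have cA': "card A' = card A" unfolding A'_def using aut_fam_inj[OF a] by (simp add: card_image)
  have cB': "card B' = card B" unfolding B'_def using aut_fam_inj[OF a] by (simp add: card_image)
  have A'H: "A' \<subseteq> H p" unfolding A'_def using AH aut_H[OF a] by blast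
  have B'H: "B' \<subseteq> H q" unfolding B'_def using BH aut_H[OF a] by blast
  have cr': "t \<le> card (F \<inter> G)" if FA: "F \<in> A'" and GB: "G \<in> B'" for F G
  proof -
    obtain F0 where "F0 \<in> A" "F = \<sigma> ` F0" using FA unfolding A'_def by (rule imageE)
    moreover obtain G0 where "G0 \<in> B" "G = \<sigma> ` G0" using GB unfolding B'_def by (rule imageE)
    ultimately show ?thesis using cr aut_card_int[OF a] by simp
  qed
  have KA': "K \<in> A'" unfolding A'_def using K by (metis image_eqI)
  have ok1: "ok p q t (A \<inter> A') (B \<union> B')"
    unfolding ok_def cross_t_intersecting_def using AH BH B'H K KA' Bne cr cr' by blast
  have c1: "card (A \<inter> A') + card (A \<union> A') = card A + card A'"
    using card_Un_Int[OF finA finA'] by simp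
  have c2: "card (B \<inter> B') + card (B \<union> B') = card B + card B'"
    using card_Un_Int[OF finB finB'] by simp
  have AleB: "card A \<le> card B" using mini[OF ok] by simp
  have "A \<subseteq> A'"
  proof (cases "B \<inter> B' = {}")
    case True
    then have "card (B \<union> B') = 2 * card B" using c2 cB' by simp
    moreover have "card (A \<inter> A') + card (B \<union> B') \<le> card A + card B" using maxi[OF ok1] .
    ultimately have "card (A \<inter> A') = 0" using AleB by simp
    then have "A \<inter> A' = {}" using finA by simp
    then show ?thesis using K KA' by blast
  next
    case False
    have ok2: "ok p q t (A \<union> A') (B \<inter> B')"
      unfolding ok_def cross_t_intersecting_def using AH A'H BH Ane False cr cr' by blast
    have "card (A \<union> A') + card (B \<inter> B') \<le> card A + card B" using maxi[OF ok2] .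
    moreover have "card (A \<inter> A') + card (B \<union> B') \<le> card A + card B" using maxi[OF ok1] .
    ultimately have "card (A \<inter> A') + card (B \<union> B') = card A + card B" using c1 c2 cA' cB' by simp
    then have "card A \<le> card (A \<inter> A')" using mini[OF ok1] by simp
    then have "A \<inter> A' = A" using finA by (metis Int_lower1 card_seteq)
    then show ?thesis by blast
  qed
  then have "A' = A" using card_subset_eq[OF finA' _ ] cA' by (metis card_seteq finA')
  then show ?thesis using E unfolding A'_def by blast
qed

end

lemma swap1: "finite E \<Longrightarrow> d \<in> E \<Longrightarrow> d \<in> G \<Longrightarrow> e \<notin> G \<Longrightarrow> card (((E - {d}) \<union> {e}) \<inter> G) < card (E \<inter> G)"
proof -
  assume a: "finite E" "d \<in> E" "d \<in> G" "e \<notin> G"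
  have "((E - {d}) \<union> {e}) \<inter> G = (E \<inter> G) - {d}" using a by blast
  moreover have "card ((E \<inter> G) - {d}) < card (E \<inter> G)" using a by (intro card_Diff1_less) auto
  ultimately show ?thesis by simp
qed

context PT
begin

lemma tr_fix_part: "i \<in> {1..k} \<Longrightarrow> K \<inter> X i = {v} \<Longrightarrow> u \<in> X i \<Longrightarrow> u' \<in> X i \<Longrightarrow> v \<noteq> u \<Longrightarrow> v \<noteq> u' \<Longrightarrow> tr u u' ` K = K"
proof -
  assume a: "i \<in> {1..k}" "K \<inter> X i = {v}" "u \<in> X i" "u' \<in> X i" "v \<noteq> u" "v \<noteq> u'"
  have 1: "u \<notin> K"
  proof
    assume "u \<in> K" then have "u \<in> K \<inter> X i" using a(3) by blast
    then show False using a(2) a(5) by auto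
  qed
  have 2: "u' \<notin> K"
  proof
    assume "u' \<in> K" then have "u' \<in> K \<inter> X i" using a(4) by blast
    then show False using a(2) a(6) by auto
  qed
  show ?thesis using 1 2 by (rule tr_fix)
qed

lemma tr_op: "i \<in> {1..k} \<Longrightarrow> E \<inter> X i = {u} \<Longrightarrow> u' \<in> X i \<Longrightarrow> u \<noteq> u' \<Longrightarrow> tr u u' ` E = (E - {u}) \<union> {u'}"
proof -
  assume a: "i \<in> {1..k}" "E \<inter> X i = {u}" "u' \<in> X i" "u \<noteq> u'"
  have 1: "u \<in> E" using a by blast
  have 2: "u' \<notin> E"
  proof
    assume "u' \<in> E" then have "u' \<in> E \<inter> X i" using a(3) by blast
    then show False using a(2) a(4) by auto
  qed
  show ?thesis using 1 2 by (rule tr_move)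
qed

lemma lemX:
  assumes AH: "A \<subseteq> H p"
    and blkA: "blk A"
    and i: "i \<in> {1..k}"
    and op1: "\<And>E u u'. E \<in> A \<Longrightarrow> E \<inter> X i = {u} \<Longrightarrow> u' \<in> X i \<Longrightarrow> (E - {u}) \<union> {u'} \<in> A"
    and E0: "E0 \<in> A" "E0 \<inter> X i \<noteq> {}"
    and G: "G \<in> H q" and cr: "\<And>E. E \<in> A \<Longrightarrow> t \<le> card (E \<inter> G)" and t: "1 \<le> t"
  shows False
proof -
  have op2: "(E - {d}) \<union> {e} \<in> A"
    if E: "E \<in> A" and w0: "E \<inter> X i = {w0}" and d: "d \<in> E" "d \<in> X h" and h: "h \<in> {1..k}" "h \<noteq> i"
      and e: "e \<in> X h" for E w0 d h e
  proof -
    have EH: "E \<in> H p" using E AH by blast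
    have dh: "E \<inter> X h = {d}" using single_eq[OF EH h(1) d] .
    have w0i: "w0 \<in> X i" using w0 by blast
    obtain \<sigma> where s: "aut \<sigma>" "\<sigma> d = w0" "\<forall>z. z \<notin> X h \<union> X i \<longrightarrow> \<sigma> z = z"
      "\<forall>z\<in>X h. \<sigma> z \<in> X i" "\<forall>z\<in>X i. \<sigma> z \<in> X h"
      using pswap[OF h(1) i h(2) d(2) w0i] by blast
    have sw: "\<sigma> w0 = d" using s(2) aut_invol[OF s(1), of d] by simp
    define R where "R = E - (X h \<union> X i)"
    have ER: "E = insert d (insert w0 R)" unfolding R_def using dh w0 by blast
    have sR: "\<sigma> ` R = R"
    proof -
      have "\<sigma> ` R = id ` R" by (rule image_cong) (use s(3) in \<open>auto simp: R_def\<close>)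
      then show ?thesis by simp
    qed
    have sE: "\<sigma> ` E = E" using ER sR s(2) sw by (simp add: insert_commute)
    have se: "\<sigma> e \<in> X i" using s(4) e by blast
    have E'A: "(E - {w0}) \<union> {\<sigma> e} \<in> A" using op1[OF E w0 se] .
    have dw: "d \<noteq> w0" using disjI[OF h(1) i h(2)] d(2) w0i by blast
    have Rw: "w0 \<notin> R" "d \<notin> R" unfolding R_def using w0i d(2) by blast+
    have Ew: "E - {w0} = insert d R" using ER dw Rw by blast
    have Ed: "E - {d} = insert w0 R" using ER dw Rw by blast
    have E'eq: "(E - {w0}) \<union> {\<sigma> e} = insert d (insert (\<sigma> e) R)"
      using Ew by blast
    have "\<sigma> ` ((E - {w0}) \<union> {\<sigma> e}) = insert w0 (insert e R)"
      unfolding E'eq using sR s(2) aut_invol[OF s(1), of e] by simp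
    also have "\<dots> = (E - {d}) \<union> {e}" using Ed by blast
    finally have eq: "\<sigma> ` ((E - {w0}) \<union> {\<sigma> e}) = (E - {d}) \<union> {e}" .
    show ?thesis using blkD[OF blkA s(1) E sE E'A] unfolding eq .
  qed
  define P where "P = (\<lambda>E. E \<in> A \<and> E \<inter> X i \<noteq> {})"
  have "P E0" unfolding P_def using E0 by blast
  then obtain E where PE: "P E" and minE: "\<And>E'. P E' \<Longrightarrow> card (E \<inter> G) \<le> card (E' \<inter> G)"
    using ex_has_least_nat[of P E0 "\<lambda>E. card (E \<inter> G)"] by blast
  have EA: "E \<in> A" and Ei: "E \<inter> X i \<noteq> {}" using PE unfolding P_def by auto
  have EH: "E \<in> H p" using EA AH by blast
  have "1 \<le> card (E \<inter> G)" using cr[OF EA] t by simp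
  then obtain d where dEG: "d \<in> E" "d \<in> G" by (metis Int_iff card.empty ex_in_conv not_one_le_zero)
  obtain h where h: "h \<in> {1..k}" "d \<in> X h" using part_ex H_sub[OF EH] dEG(1) by blast
  have Gh: "G \<inter> X h = {d}" using single_eq[OF G h(1) dEG(2) h(2)] .
  obtain e where e: "e \<in> X h" "e \<noteq> d" using other_elem[OF h(1)] by blast
  have eG: "e \<notin> G" using Gh e by blast
  have less: "card (((E - {d}) \<union> {e}) \<inter> G) < card (E \<inter> G)"
    using swap1[OF H_fin[OF EH] dEG eG] .
  have "P ((E - {d}) \<union> {e})"
  proof (cases "h = i")
    case True
    have "E \<inter> X i = {d}" using single_eq[OF EH h(1) dEG(1) h(2)] True by simp
    then have "(E - {d}) \<union> {e} \<in> A" using op1[OF EA] e True by blast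
    then show ?thesis unfolding P_def using e True by blast
  next
    case False
    obtain w0 where w0: "E \<inter> X i = {w0}" using single[OF EH i Ei] by blast
    have "(E - {d}) \<union> {e} \<in> A" using op2[OF EA w0 dEG(1) h(2) h(1) False e(1)] .
    moreover have "w0 \<noteq> d" using w0 h False disjI[OF h(1) i] by blast
    ultimately show ?thesis unfolding P_def using w0 by blast
  qed
  then show False using minE less by fastforce
qed

lemma op1_caseI:
  assumes AH: "A \<subseteq> H p"
    and blkA: "blk A"
    and i: "i \<in> {1..k}" and E1: "E1 \<in> A" "E1 \<inter> X i = {}"
    and E: "E \<in> A" "E \<inter> X i = {u}" and u': "u' \<in> X i"
  shows "(E - {u}) \<union> {u'} \<in> A"
proof (cases "u = u'")
  case True
  then have "(E - {u}) \<union> {u'} = E" using E by blast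
  then show ?thesis using E by simp
next
  case False
  have u: "u \<in> X i" using E by blast
  have a: "aut (tr u u')" using tr_aut[OF i u u'] .
  have "tr u u' ` E1 = E1" using E1 u u' by (intro tr_fix) blast+
  then have "tr u u' ` E \<in> A" using blkD[OF blkA a E1(1) _ E(1)] by simp
  then show ?thesis using tr_op[OF i E(2) u' False] by simp
qed

lemma op1_caseII:
  assumes AH: "A \<subseteq> H p"
    and blkA: "blk A"
    and n3: "n \<ge> 3"
    and i: "i \<in> {1..k}" and F1: "F1 \<in> A" "F1 \<inter> X i = {x}" and F2: "F2 \<in> A" "F2 \<inter> X i = {y}"
    and xy: "x \<noteq> y"
    and E: "E \<in> A" "E \<inter> X i = {u}" and u': "u' \<in> X i"
  shows "(E - {u}) \<union> {u'} \<in> A"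
proof -
  have x: "x \<in> X i" and y: "y \<in> X i" using F1 F2 by blast+
  obtain w where w: "w \<in> X i" "w \<noteq> x" "w \<noteq> y"
  proof -
    have "card (X i - {x, y}) \<ge> card (X i) - card {x, y}" by (rule diff_card_le_card_Diff) simp
    moreover have "card {x, y} = 2" using xy by simp
    ultimately have "card (X i - {x,y}) \<ge> 1" using cardXi[OF i] n3 by simp
    then have "X i - {x, y} \<noteq> {}" by (metis card.empty not_one_le_zero)
    then show ?thesis using that by blast
  qed
  have K3: "(F2 - {y}) \<union> {w} \<in> A"
  proof -
    have "tr y w ` F1 = F1" by (rule tr_fix_part[OF i F1(2) y w(1)]) (use xy w in auto)
    then have "tr y w ` F2 \<in> A" using blkD[OF blkA tr_aut[OF i y w(1)] F1(1) _ F2(1)] by simp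
    then show ?thesis using tr_op[OF i F2(2) w(1)] w by simp
  qed
  have K3i: "((F2 - {y}) \<union> {w}) \<inter> X i = {w}" using F2 w by blast
  show ?thesis
  proof (cases "u = u'")
    case True
    then have "(E - {u}) \<union> {u'} = E" using E by blast
    then show ?thesis using E by simp
  next
    case False
    have u: "u \<in> X i" using E by blast
    have a: "aut (tr u u')" using tr_aut[OF i u u'] .
    obtain K v where K: "K \<in> A" "K \<inter> X i = {v}" "v \<noteq> u" "v \<noteq> u'"
    proof (cases "x \<noteq> u \<and> x \<noteq> u'")
      case True then show ?thesis using that F1 by blast
    next
      case False1: False
      show ?thesis
      proof (cases "y \<noteq> u \<and> y \<noteq> u'")
        case True then show ?thesis using that F2 by blast
      next
        case False2: False
        have "w \<noteq> u \<and> w \<noteq> u'" using False1 False2 w xy by blast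
        then show ?thesis using that K3 K3i by blast
      qed
    qed
    have "tr u u' ` K = K" using tr_fix_part[OF i K(2) u u' K(3) K(4)] .
    then have "tr u u' ` E \<in> A" using blkD[OF blkA a K(1) _ E(1)] by simp
    then show ?thesis using tr_op[OF i E(2) u' False] by simp
  qed
qed

end

lemma swap2: "finite E \<Longrightarrow> d \<in> E \<Longrightarrow> d \<in> G \<Longrightarrow> a \<notin> G \<Longrightarrow> b \<notin> G \<Longrightarrow> d \<notin> R \<Longrightarrow> R \<subseteq> E
  \<Longrightarrow> card ((R \<union> {a, b}) \<inter> G) < card (E \<inter> G)"
proof -
  assume as: "finite E" "d \<in> E" "d \<in> G" "a \<notin> G" "b \<notin> G" "d \<notin> R" "R \<subseteq> E"
  have "(R \<union> {a, b}) \<inter> G \<subseteq> (E \<inter> G) - {d}" using as by blast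
  then have "card ((R \<union> {a, b}) \<inter> G) \<le> card ((E \<inter> G) - {d})" using as(1) by (intro card_mono) auto
  also have "\<dots> < card (E \<inter> G)" using as by (intro card_Diff1_less) auto
  finally show ?thesis .
qed

context PT
begin

lemma ext_step: assumes F: "F \<in> H p" and pk: "p < k" shows "\<exists>W \<in> H (Suc p). F \<subseteq> W"
proof -
  have "card (supp F) < card {1..k}" using card_supp[OF F] pk by simp
  then have "supp F \<noteq> {1..k}" by auto
  then obtain i where i: "i \<in> {1..k}" "i \<notin> supp F" using supp_sub by blast
  then have Fi: "F \<inter> X i = {}" unfolding supp_def by blast
  obtain x where x: "x \<in> X i" using X_ne[OF i(1)] by blast
  have xF: "x \<notin> F" using Fi x by blast
  have "insert x F \<in> H (Suc p)"
    unfolding Hfam_def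
  proof (intro CollectI conjI ballI)
    show "insert x F \<subseteq> {1..k*n}" using H_sub[OF F] Xsub[OF i(1)] x by blast
    show "card (insert x F) = Suc p" using H_card[OF F] H_fin[OF F] xF by simp
  next
    fix j assume j: "j \<in> {1..k}"
    show "card (insert x F \<inter> X j) \<le> 1"
    proof (cases "j = i")
      case True
      then have "insert x F \<inter> X j = {x}" using Fi x by blast
      then show ?thesis by simp
    next
      case False
      then have "x \<notin> X j" using disjI[OF i(1) j] x by blast
      then have "insert x F \<inter> X j = F \<inter> X j" by blast
      then show ?thesis using H_part[OF F j] by simp
    qed
  qed
  then show ?thesis by blast
qed

lemma ext: assumes F: "F \<in> H p" and pq: "p \<le> q" and qk: "q \<le> k" shows "\<exists>W \<in> H q. F \<subseteq> W"
proof -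
  have "\<forall>F p. F \<in> H p \<longrightarrow> p + d \<le> k \<longrightarrow> (\<exists>W \<in> H (p + d). F \<subseteq> W)" for d
  proof (induction d)
    case 0 then show ?case by auto
  next
    case (Suc d)
    show ?case
    proof (intro allI impI)
      fix F p assume F: "F \<in> H p" and pk: "p + Suc d \<le> k"
      obtain W where W: "W \<in> H (p + d)" "F \<subseteq> W" using Suc.IH F pk by fastforce
      obtain W' where W': "W' \<in> H (Suc (p + d))" "W \<subseteq> W'" using ext_step[OF W(1)] pk by auto
      show "\<exists>W \<in> H (p + Suc d). F \<subseteq> W" using W W' by auto
    qed
  qed
  then show ?thesis using F pq qk by (metis le_add_diff_inverse)
qed

lemma restr: assumes F: "F \<in> H p" and qp: "q \<le> p" shows "\<exists>W \<in> H q. W \<subseteq> F"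
proof -
  obtain W where W: "W \<subseteq> F" "card W = q" using obtain_subset_with_card_n[of q F] H_card[OF F] qp by metis
  have "W \<in> H q" unfolding Hfam_def
  proof (intro CollectI conjI ballI)
    show "W \<subseteq> {1..k*n}" using W H_sub[OF F] by blast
    show "card W = q" by (rule W(2))
  next
    fix i assume i: "i \<in> {1..k}"
    have "card (W \<inter> X i) \<le> card (F \<inter> X i)" using W H_fin[OF F] by (intro card_mono) auto
    then show "card (W \<inter> X i) \<le> 1" using H_part[OF F i] by simp
  qed
  then show ?thesis using W by blast
qed

lemma dflip:
  assumes AH: "A \<subseteq> H p"
    and blkA: "blk A"
    and E: "E \<in> A" and K: "K \<in> A" and h: "h \<in> {1..k}" and j: "j \<in> {1..k}" and hj: "h \<noteq> j"
    and Eh: "E \<inter> X h = {eh}" and Ej: "E \<inter> X j = {ej}" and Kh: "K \<inter> X h = {kh}" and Kj: "K \<inter> X j = {kj}"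
    and cond: "(eh = kh) \<noteq> (ej = kj)"
  shows "\<exists>a b. a \<in> X h \<and> a \<notin> E \<and> b \<in> X j \<and> b \<notin> E \<and> (E - (X h \<union> X j)) \<union> {a, b} \<in> A"
proof -
  have khX: "kh \<in> X h" and kjX: "kj \<in> X j" and ehX: "eh \<in> X h" and ejX: "ej \<in> X j"
    using Kh Kj Eh Ej by blast+
  obtain \<sigma> where s: "aut \<sigma>" "\<sigma> kh = kj" "\<forall>z. z \<notin> X h \<union> X j \<longrightarrow> \<sigma> z = z"
      "\<forall>z\<in>X h. \<sigma> z \<in> X j" "\<forall>z\<in>X j. \<sigma> z \<in> X h"
    using pswap[OF h j hj khX kjX] by blast
  have skj: "\<sigma> kj = kh" using s(2) aut_invol[OF s(1), of kh] by simp
  have fixR: "\<sigma> ` (Z - (X h \<union> X j)) = Z - (X h \<union> X j)" for Z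
  proof -
    have "\<sigma> ` (Z - (X h \<union> X j)) = id ` (Z - (X h \<union> X j))" by (rule image_cong) (use s(3) in auto)
    then show ?thesis by simp
  qed
  have KR: "K = insert kh (insert kj (K - (X h \<union> X j)))" using Kh Kj by blast
  have "\<sigma> ` K = insert kj (insert kh (K - (X h \<union> X j)))"
    by (subst KR) (simp add: s(2) skj fixR)
  also have "\<dots> = K" using KR by blast
  finally have sK: "\<sigma> ` K = K" .
  have ER: "E = insert eh (insert ej (E - (X h \<union> X j)))" using Eh Ej by blast
  have sE: "\<sigma> ` E = (E - (X h \<union> X j)) \<union> {\<sigma> ej, \<sigma> eh}"
    by (subst ER) (simp add: fixR insert_commute)
  have n1: "\<sigma> eh \<noteq> ej" and n2: "\<sigma> ej \<noteq> eh"
  proof -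
    have inv: "\<And>z. \<sigma> (\<sigma> z) = z" using aut_invol[OF s(1)] by blast
    show "\<sigma> eh \<noteq> ej"
    proof
      assume a: "\<sigma> eh = ej"
      show False
      proof (cases "eh = kh")
        case True then show False using a s(2) cond by simp
      next
        case False
        then have "ej = kj" using cond by simp
        then have "\<sigma> eh = kj" using a by simp
        then have "eh = \<sigma> kj" using inv by metis
        then show False using skj False by simp
      qed
    qed
    show "\<sigma> ej \<noteq> eh"
    proof
      assume a: "\<sigma> ej = eh"
      show False
      proof (cases "eh = kh")
        case True
        then have "ej \<noteq> kj" using cond by simp
        have "ej = \<sigma> eh" using a inv by metis
        then have "ej = kj" using True s(2) by simp
        then show False using \<open>ej \<noteq> kj\<close> by simp
      next
        case False
        then have "ej = kj" using cond by simp
        then show False using a skj False by simp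
      qed
    qed
  qed
  have aX: "\<sigma> ej \<in> X h" using s(5) ejX by blast
  have bX: "\<sigma> eh \<in> X j" using s(4) ehX by blast
  have aE: "\<sigma> ej \<notin> E" using Eh aX n2 by blast
  have bE: "\<sigma> eh \<notin> E" using Ej bX n1 by blast
  have "\<sigma> ` E \<in> A" using blkD[OF blkA s(1) K sK E] .
  then have "(E - (X h \<union> X j)) \<union> {\<sigma> ej, \<sigma> eh} \<in> A" using sE by simp
  then show ?thesis using aX bX aE bE by blast
qed

end

context PT
begin

lemma sing_eq: "Z \<inter> Y = {d} \<Longrightarrow> a \<in> Z \<Longrightarrow> a \<in> Y \<Longrightarrow> a = d"
  by auto

lemma dint:
  assumes h: "h \<in> {1..k}" and j: "j \<in> {1..k}" and hj: "h \<noteq> j" and a: "a \<in> X h" and b: "b \<in> X j"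
  shows "((E - (X h \<union> X j)) \<union> {a, b}) \<inter> X h = {a}"
    and "((E - (X h \<union> X j)) \<union> {a, b}) \<inter> X j = {b}"
    and "g \<in> {1..k} \<Longrightarrow> g \<noteq> h \<Longrightarrow> g \<noteq> j \<Longrightarrow> ((E - (X h \<union> X j)) \<union> {a, b}) \<inter> X g = E \<inter> X g"
proof -
  have d: "X h \<inter> X j = {}" using disjI[OF h j hj] .
  show "((E - (X h \<union> X j)) \<union> {a, b}) \<inter> X h = {a}" using a b d by blast
  show "((E - (X h \<union> X j)) \<union> {a, b}) \<inter> X j = {b}" using a b d by blast
  assume g: "g \<in> {1..k}" "g \<noteq> h" "g \<noteq> j"
  have "X g \<inter> X h = {}" "X g \<inter> X j = {}" using disjI g h j by auto
  then show "((E - (X h \<union> X j)) \<union> {a, b}) \<inter> X g = E \<inter> X g" using a b by blast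
qed

lemma dsub: "E \<in> H p \<Longrightarrow> h \<in> {1..k} \<Longrightarrow> j \<in> {1..k} \<Longrightarrow> a \<in> X h \<Longrightarrow> b \<in> X j \<Longrightarrow> (E - (X h \<union> X j)) \<union> {a, b} \<subseteq> {1..k*n}"
  using H_sub Xsub by blast

lemma case_ii:
  assumes AH: "A \<subseteq> H p" and BH: "B \<subseteq> H q"
    and cr: "\<And>F G. F \<in> A \<Longrightarrow> G \<in> B \<Longrightarrow> t \<le> card (F \<inter> G)"
    and blkA: "blk A"
    and F1: "F1 \<in> A" and t1: "1 \<le> t" and qk: "q \<le> k"
    and sameS: "\<And>E1 E2 i. E1 \<in> A \<Longrightarrow> E2 \<in> A \<Longrightarrow> i \<in> {1..k} \<Longrightarrow> E1 \<inter> X i = {} \<Longrightarrow> E2 \<inter> X i = {}"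
    and n2: "n = 2"
    and G0: "G0 \<in> B"
    and E0: "E0 \<in> A" and a0: "a0 \<in> supp F1" and b0: "b0 \<in> supp F1"
    and E0a: "E0 \<inter> X a0 \<noteq> F1 \<inter> X a0" and E0b: "E0 \<inter> X b0 = F1 \<inter> X b0"
  shows "card A + card B \<le> 1 + card (N t q F1)"
proof -
  define S where "S = supp F1"
  have Sk: "\<And>h. h \<in> S \<Longrightarrow> h \<in> {1..k}" unfolding S_def supp_def by blast
  have F1H: "F1 \<in> H p" using F1 AH by blast
  have el: "\<exists>e. E \<inter> X h = {e}" if E: "E \<in> A" and h: "h \<in> S" for E h
  proof -
    have "F1 \<inter> X h \<noteq> {}" using h unfolding S_def supp_def by blast
    then have "E \<inter> X h \<noteq> {}" using sameS[OF E F1 Sk[OF h]] by blast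
    then show ?thesis using single[OF _ Sk[OF h]] E AH by blast
  qed
  have inS: "h \<in> S" if E: "E \<in> A" and h: "h \<in> {1..k}" and x: "x \<in> E" "x \<in> X h" for E h x
  proof -
    have "E \<inter> X h \<noteq> {}" using x by blast
    then have "F1 \<inter> X h \<noteq> {}" using sameS[OF F1 E h] by blast
    then show ?thesis unfolding S_def supp_def using h by blast
  qed
  have DF: "\<exists>a b. a \<in> X h \<and> a \<notin> E \<and> b \<in> X j \<and> b \<notin> E \<and> (E - (X h \<union> X j)) \<union> {a, b} \<in> A"
    if E: "E \<in> A" and K: "K \<in> A" and h: "h \<in> S" and j: "j \<in> S" and hj: "h \<noteq> j"
      and c: "(E \<inter> X h = K \<inter> X h) \<noteq> (E \<inter> X j = K \<inter> X j)" for E K h j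
  proof -
    obtain eh where eh: "E \<inter> X h = {eh}" using el[OF E h] by blast
    obtain ej where ej: "E \<inter> X j = {ej}" using el[OF E j] by blast
    obtain kh where kh: "K \<inter> X h = {kh}" using el[OF K h] by blast
    obtain kj where kj: "K \<inter> X j = {kj}" using el[OF K j] by blast
    have "(eh = kh) \<noteq> (ej = kj)" using c eh ej kh kj by simp
    then show ?thesis using dflip[OF AH blkA E K Sk[OF h] Sk[OF j] hj eh ej kh kj] by blast
  qed
  have Kex: "\<exists>K\<in>A. (K \<inter> X h = F1 \<inter> X h) \<noteq> (K \<inter> X j = F1 \<inter> X j)"
    if h: "h \<in> S" and j: "j \<in> S" and hj: "h \<noteq> j" for h j
  proof (cases "(E0 \<inter> X h = F1 \<inter> X h) \<noteq> (E0 \<inter> X j = F1 \<inter> X j)")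
    case True then show ?thesis using E0 by blast
  next
    case False
    show ?thesis
    proof (cases "E0 \<inter> X h = F1 \<inter> X h")
      case True
      then have agj: "E0 \<inter> X j = F1 \<inter> X j" using False by simp
      have ah: "a0 \<noteq> h" "a0 \<noteq> j" using True agj E0a by auto
      have a0S: "a0 \<in> S" using a0 unfolding S_def .
      have "(E0 \<inter> X a0 = F1 \<inter> X a0) \<noteq> (E0 \<inter> X h = F1 \<inter> X h)" using E0a True by simp
      then obtain a b where ab: "a \<in> X a0" "a \<notin> E0" "b \<in> X h" "b \<notin> E0"
        "(E0 - (X a0 \<union> X h)) \<union> {a, b} \<in> A"
        using DF[OF E0 F1 a0S h ah(1)] by blast
      define K where "K = (E0 - (X a0 \<union> X h)) \<union> {a, b}"
      have Kh: "K \<inter> X h = {b}" unfolding K_def by (rule dint(2)[OF Sk[OF a0S] Sk[OF h] ah(1) ab(1) ab(3)])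
      have Kj: "K \<inter> X j = E0 \<inter> X j" unfolding K_def
        by (rule dint(3)[OF Sk[OF a0S] Sk[OF h] ah(1) ab(1) ab(3) Sk[OF j]]) (use ah hj in auto)
      have n1: "K \<inter> X h \<noteq> F1 \<inter> X h"
      proof
        assume "K \<inter> X h = F1 \<inter> X h"
        then have "b \<in> E0" using Kh True by auto
        then show False using ab(4) by simp
      qed
      have KA: "K \<in> A" using ab(5) unfolding K_def .
      show ?thesis by (rule bexI[OF _ KA]) (simp add: n1 Kj agj)
    next
      case False2: False
      then have dj: "E0 \<inter> X j \<noteq> F1 \<inter> X j" using False by simp
      have bh: "b0 \<noteq> h" "b0 \<noteq> j" using False2 dj E0b by auto
      have b0S: "b0 \<in> S" using b0 unfolding S_def .
      have "(E0 \<inter> X j = F1 \<inter> X j) \<noteq> (E0 \<inter> X b0 = F1 \<inter> X b0)" using dj E0b by simp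
      then obtain a b where ab: "a \<in> X j" "a \<notin> E0" "b \<in> X b0" "b \<notin> E0"
        "(E0 - (X j \<union> X b0)) \<union> {a, b} \<in> A"
        using DF[OF E0 F1 j b0S bh(2)[symmetric]] by blast
      define K where "K = (E0 - (X j \<union> X b0)) \<union> {a, b}"
      have Kj: "K \<inter> X j = {a}" unfolding K_def by (rule dint(1)[OF Sk[OF j] Sk[OF b0S] bh(2)[symmetric] ab(1) ab(3)])
      have Kh: "K \<inter> X h = E0 \<inter> X h" unfolding K_def
        by (rule dint(3)[OF Sk[OF j] Sk[OF b0S] bh(2)[symmetric] ab(1) ab(3) Sk[OF h]]) (use bh hj in auto)
      obtain e0j where e0j: "E0 \<inter> X j = {e0j}" using el[OF E0 j] by blast
      obtain f1j where f1j: "F1 \<inter> X j = {f1j}" using el[OF F1 j] by blast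
      have "a = f1j"
        using n2_eq[OF n2 Sk[OF j], of a f1j e0j] ab(1,2) e0j f1j dj by blast
      then have n1: "K \<inter> X j = F1 \<inter> X j" using Kj f1j by simp
      have KA: "K \<in> A" using ab(5) unfolding K_def .
      show ?thesis by (rule bexI[OF _ KA]) (simp add: n1 Kh False2)
    qed
  qed
  have DF2: "\<exists>a b. a \<in> X h \<and> a \<notin> E \<and> b \<in> X j \<and> b \<notin> E \<and> (E - (X h \<union> X j)) \<union> {a, b} \<in> A"
    if E: "E \<in> A" and h: "h \<in> S" and j: "j \<in> S" and hj: "h \<noteq> j" for E h j
  proof (cases "(E \<inter> X h = F1 \<inter> X h) \<noteq> (E \<inter> X j = F1 \<inter> X j)")
    case True then show ?thesis using DF[OF E F1 h j hj] by blast
  next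
    case False
    obtain K where K: "K \<in> A" "(K \<inter> X h = F1 \<inter> X h) \<noteq> (K \<inter> X j = F1 \<inter> X j)" using Kex[OF h j hj] by blast
    obtain eh where eh: "E \<inter> X h = {eh}" using el[OF E h] by blast
    obtain ej where ej: "E \<inter> X j = {ej}" using el[OF E j] by blast
    obtain kh where kh: "K \<inter> X h = {kh}" using el[OF K(1) h] by blast
    obtain kj where kj: "K \<inter> X j = {kj}" using el[OF K(1) j] by blast
    obtain fh where fh: "F1 \<inter> X h = {fh}" using el[OF F1 h] by blast
    obtain fj where fj: "F1 \<inter> X j = {fj}" using el[OF F1 j] by blast
    have X: "eh \<in> X h" "kh \<in> X h" "fh \<in> X h" "ej \<in> X j" "kj \<in> X j" "fj \<in> X j"
      using eh kh fh ej kj fj by blast+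
    have Kc: "(kh = fh) \<noteq> (kj = fj)" using K(2) kh kj fh fj by simp
    have Ec: "(eh = fh) = (ej = fj)" using False eh ej fh fj by simp
    have "(eh = kh) \<noteq> (ej = kj)"
    proof (cases "eh = fh")
      case True
      then have "ej = fj" using Ec by simp
      then show ?thesis using True Kc by auto
    next
      case False
      then have ne: "ej \<noteq> fj" using Ec by simp
      have 1: "(eh = kh) = (kh \<noteq> fh)"
        using n2_eq[OF n2 Sk[OF h], of eh kh fh] X False by auto
      have 2: "(ej = kj) = (kj \<noteq> fj)"
        using n2_eq[OF n2 Sk[OF j], of ej kj fj] X ne by auto
      show ?thesis using 1 2 Kc by simp
    qed
    then have "(E \<inter> X h = K \<inter> X h) \<noteq> (E \<inter> X j = K \<inter> X j)" using eh ej kh kj by simp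
    then show ?thesis using DF[OF E K(1) h j hj] by blast
  qed
  have G0H: "G0 \<in> H q" using G0 BH by blast
  obtain E where EA: "E \<in> A" and minE: "\<And>E'. E' \<in> A \<Longrightarrow> card (E \<inter> G0) \<le> card (E' \<inter> G0)"
    using ex_has_least_nat[of "\<lambda>E. E \<in> A" F1 "\<lambda>E. card (E \<inter> G0)"] F1 by blast
  have EH: "E \<in> H p" using EA AH by blast
  have "1 \<le> card (E \<inter> G0)" using cr[OF EA G0] t1 by simp
  then obtain d where d: "d \<in> E" "d \<in> G0" by (metis Int_iff card.empty ex_in_conv not_one_le_zero)
  obtain h where h: "h \<in> {1..k}" "d \<in> X h" using part_ex H_sub[OF EH] d(1) by blast
  have hS: "h \<in> S" using inS[OF EA h(1) d(1) h(2)] .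
  have Gh: "G0 \<inter> X h = {d}" using single_eq[OF G0H h(1) d(2) h(2)] .
  have Eh: "E \<inter> X h = {d}" using single_eq[OF EH h(1) d(1) h(2)] .
  have red: False if j: "j \<in> S" "j \<noteq> h" and bG: "\<And>b. b \<in> X j \<Longrightarrow> b \<notin> E \<Longrightarrow> b \<notin> G0" for j
  proof -
    obtain a b where ab: "a \<in> X h" "a \<notin> E" "b \<in> X j" "b \<notin> E" "(E - (X h \<union> X j)) \<union> {a, b} \<in> A"
      using DF2[OF EA hS j(1) j(2)[symmetric]] by blast
    have aG: "a \<notin> G0" using sing_eq[OF Gh, of a] ab(1,2) d(1) by blast
    have "card (((E - (X h \<union> X j)) \<union> {a, b}) \<inter> G0) < card (E \<inter> G0)"
      by (rule swap2[OF H_fin[OF EH] d aG bG[OF ab(3,4)]]) (use h(2) in auto)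
    then show False using minE[OF ab(5)] by simp
  qed
  have cover: "G0 \<inter> X j \<noteq> {}" if j: "j \<in> S" for j
  proof
    assume e: "G0 \<inter> X j = {}"
    have "j \<noteq> h" using e Gh by blast
    then show False using red[OF j] e by blast
  qed
  have le1: "card (E \<inter> G0) \<le> 1"
  proof (rule ccontr)
    assume "\<not> card (E \<inter> G0) \<le> 1"
    then have "card ((E \<inter> G0) - {d}) \<ge> 1" using d by (simp add: card_Diff_singleton)
    then obtain d' where d': "d' \<in> E" "d' \<in> G0" "d' \<noteq> d" by (metis DiffE Int_iff card.empty ex_in_conv insertI1 not_one_le_zero)
    obtain j where j: "j \<in> {1..k}" "d' \<in> X j" using part_ex H_sub[OF EH] d'(1) by blast
    have jS: "j \<in> S" using inS[OF EA j(1) d'(1) j(2)] .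
    have jh: "j \<noteq> h" using Eh d' j by blast
    have Gj: "G0 \<inter> X j = {d'}" using single_eq[OF G0H j(1) d'(2) j(2)] .
    show False
    proof (rule red[OF jS jh])
      fix b assume b: "b \<in> X j" "b \<notin> E"
      show "b \<notin> G0" using sing_eq[OF Gj, of b] b d'(1) by blast
    qed
  qed
  have tt: "t = 1" using le1 cr[OF EA G0] t1 by simp
  have pq: "p \<le> q"
  proof -
    have "S \<subseteq> supp G0" using cover Sk unfolding supp_def by blast
    then have "card S \<le> card (supp G0)" by (intro card_mono) (auto intro: finite_subset[OF supp_sub])
    then show ?thesis using card_supp[OF F1H] card_supp[OF G0H] unfolding S_def by simp
  qed
  obtain W1 where W1: "W1 \<in> H q" "F1 \<subseteq> W1" using ext[OF F1H pq qk] by blast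
  define R where "R = W1 - F1"
  define U where "U = (\<Union>h\<in>S. X h)"
  have RU: "R \<inter> U = {}"
  proof (rule ccontr)
    assume "R \<inter> U \<noteq> {}"
    then obtain r h where r: "r \<in> R" "h \<in> S" "r \<in> X h" unfolding U_def by blast
    have rW: "r \<in> W1" and rF: "r \<notin> F1" using r(1) unfolding R_def by auto
    obtain f where f: "F1 \<inter> X h = {f}" using el[OF F1 r(2)] by blast
    have fF: "f \<in> F1" and fX: "f \<in> X h" using f by auto
    have Wh: "W1 \<inter> X h = {r}" using single_eq[OF W1(1) Sk[OF r(2)] rW r(3)] .
    have "f = r" using sing_eq[OF Wh] fF W1(2) fX by blast
    then show False using fF rF by simp
  qed
  have EU: "E \<subseteq> U" if E: "E \<in> A" for E
  proof
    fix x assume x: "x \<in> E"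
    obtain h where h: "h \<in> {1..k}" "x \<in> X h" using part_ex H_sub x E AH by blast
    then show "x \<in> U" using inS[OF E h(1) x h(2)] unfolding U_def by blast
  qed
  define \<phi> where "\<phi> = (\<lambda>E. (U - E) \<union> R)"
  have USub: "U \<subseteq> {1..k*n}" unfolding U_def using Xsub Sk by blast
  have phiH: "\<phi> E \<in> H q" if E: "E \<in> A" for E
  proof -
    have sub: "\<phi> E \<subseteq> {1..k*n}" unfolding \<phi>_def R_def using USub H_sub[OF W1(1)] by blast
    have pc: "card (\<phi> E \<inter> X i) = card (W1 \<inter> X i)" if i: "i \<in> {1..k}" for i
    proof (cases "i \<in> S")
      case True
      obtain e where e: "E \<inter> X i = {e}" using el[OF E True] by blast
      obtain f where f: "F1 \<inter> X i = {f}" using el[OF F1 True] by blast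
      have "R \<inter> X i = {}" using RU True unfolding U_def by blast
      then have "\<phi> E \<inter> X i = X i - {e}" unfolding \<phi>_def U_def using True e by blast
      moreover have "e \<in> X i" using e by auto
      then have "card (X i - {e}) = card (X i) - 1" by (rule card_Diff_singleton)
      ultimately have "card (\<phi> E \<inter> X i) = 1" using cardXi[OF i] n2 by simp
      moreover have "W1 \<inter> X i = {f}" using single_eq[OF W1(1) i] f W1(2) by blast
      ultimately show ?thesis by simp
    next
      case False
      have "U \<inter> X i = {}" using False disjI[OF i] Sk unfolding U_def by blast
      moreover have "F1 \<inter> X i = {}" using False i unfolding S_def supp_def by blast
      ultimately have "\<phi> E \<inter> X i = W1 \<inter> X i" unfolding \<phi>_def R_def by blast
      then show ?thesis by simp
    qed
    have "card (\<phi> E) = card W1" by (rule card_parts_eq[OF sub H_sub[OF W1(1)] pc])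
    then show ?thesis unfolding Hfam_def using sub pc H_part[OF W1(1)] H_card[OF W1(1)] by simp
  qed
  have phiB: "\<phi> E \<notin> B" if E: "E \<in> A" for E
  proof
    assume "\<phi> E \<in> B"
    then have "t \<le> card (E \<inter> \<phi> E)" using cr[OF E] by blast
    moreover have "E \<inter> \<phi> E = {}" unfolding \<phi>_def using RU EU[OF E] by blast
    ultimately show False using t1 by simp
  qed
  have phiN: "\<phi> E \<in> N t q F1" if E: "E \<in> A" and ne: "E \<noteq> F1" for E
  proof -
    have EH': "E \<in> H p" using E AH by blast
    have "\<not> F1 \<subseteq> E"
    proof
      assume "F1 \<subseteq> E"
      then have "F1 = E" using card_subset_eq[OF H_fin[OF EH']] H_card[OF EH'] H_card[OF F1H] by metis
      then show False using ne by simp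
    qed
    then obtain x where x: "x \<in> F1" "x \<notin> E" by blast
    have "x \<in> \<phi> E \<inter> F1" unfolding \<phi>_def using x EU[OF F1] by blast
    then have "1 \<le> card (\<phi> E \<inter> F1)" using H_fin[OF phiH[OF E]]
      by (metis One_nat_def Suc_leI card_gt_0_iff empty_iff finite_Int)
    then show ?thesis unfolding N_def using phiH[OF E] tt by simp
  qed
  have inj: "inj_on \<phi> (A - {F1})"
  proof (rule inj_onI)
    fix E E' assume E: "E \<in> A - {F1}" and E': "E' \<in> A - {F1}" and eq: "\<phi> E = \<phi> E'"
    have "\<phi> E \<inter> U = U - E" "\<phi> E' \<inter> U = U - E'" unfolding \<phi>_def using RU by blast+
    then have "U - E = U - E'" using eq by simp
    then show "E = E'" using EU E E' by blast
  qed
  have img: "\<phi> ` (A - {F1}) \<subseteq> N t q F1 - B" using phiN phiB by blast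
  have finA: "finite A" using AH H_finite finite_subset by blast
  have BN: "B \<subseteq> N t q F1" unfolding N_def using BH cr[OF F1] by (auto simp: Int_commute)
  have "card (A - {F1}) \<le> card (N t q F1 - B)"
    using card_inj_on_le[OF inj img] N_fin by simp
  moreover have "card (A - {F1}) = card A - 1" using F1 finA by simp
  moreover have "card (N t q F1 - B) = card (N t q F1) - card B" using BN N_fin by (simp add: card_Diff_subset finite_subset)
  moreover have "card B \<le> card (N t q F1)" using BN N_fin card_mono by blast
  moreover have "1 \<le> card A" using F1 finA by (metis One_nat_def Suc_leI card_gt_0_iff empty_iff)
  ultimately show ?thesis by linarith
qed

end

context PT
begin

lemma case_i:
  assumes AH: "A \<subseteq> H p" and BH: "B \<subseteq> H q"
    and cr: "\<And>F G. F \<in> A \<Longrightarrow> G \<in> B \<Longrightarrow> t \<le> card (F \<inter> G)"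
    and F1: "F1 \<in> A" and F2: "F2 \<in> A" and F12: "F2 \<noteq> F1"
    and t1: "1 \<le> t" and tp: "t \<le> p" and tq: "t \<le> q" and qk: "q \<le> k"
    and sameS: "\<forall>E1\<in>A. \<forall>E2\<in>A. \<forall>i\<in>{1..k}. E1 \<inter> X i = {} \<longrightarrow> E2 \<inter> X i = {}"
    and n2: "n = 2"
    and noii: "\<forall>E\<in>A. \<forall>a\<in>supp F1. \<forall>b\<in>supp F1. E \<inter> X a \<noteq> F1 \<inter> X a \<longrightarrow> E \<inter> X b \<noteq> F1 \<inter> X b"
  shows "card A + card B \<le> 1 + card (N t q F1)"
proof -
  define S where "S = supp F1"
  have Sk: "\<And>h. h \<in> S \<Longrightarrow> h \<in> {1..k}" unfolding S_def supp_def by blast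
  have F1H: "F1 \<in> H p" using F1 AH by blast
  have F2H: "F2 \<in> H p" using F2 AH by blast
  have el: "\<exists>e. E \<inter> X h = {e}" if E: "E \<in> A" and h: "h \<in> S" for E h
  proof -
    have "F1 \<inter> X h \<noteq> {}" using h unfolding S_def supp_def by blast
    then have "E \<inter> X h \<noteq> {}" using sameS E F1 Sk[OF h] by blast
    then show ?thesis using single[OF _ Sk[OF h]] E AH by blast
  qed
  have inS: "h \<in> S" if E: "E \<in> A" and h: "h \<in> {1..k}" and x: "x \<in> E" "x \<in> X h" for E h x
  proof -
    have "E \<inter> X h \<noteq> {}" using x by blast
    then have "F1 \<inter> X h \<noteq> {}" using sameS F1 E h by blast
    then show ?thesis unfolding S_def supp_def using h by blast
  qed
  have outS: "E \<inter> X i = {}" if E: "E \<in> A" and i: "i \<in> {1..k}" "i \<notin> S" for E i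
  proof -
    have "F1 \<inter> X i = {}" using i unfolding S_def supp_def by blast
    then show ?thesis using sameS F1 E i(1) by blast
  qed
  have agree: "E = F1" if E: "E \<in> A" and ag: "\<forall>h\<in>S. E \<inter> X h = F1 \<inter> X h" for E
  proof (rule eq_parts)
    show "E \<subseteq> {1..k*n}" using E AH H_sub by blast
    show "F1 \<subseteq> {1..k*n}" using H_sub[OF F1H] .
    fix i assume i: "i \<in> {1..k}"
    show "E \<inter> X i = F1 \<inter> X i"
    proof (cases "i \<in> S")
      case True then show ?thesis using ag by blast
    next
      case False then show ?thesis using outS[OF E i False] outS[OF F1 i False] by simp
    qed
  qed
  obtain a where a: "a \<in> S" "F2 \<inter> X a \<noteq> F1 \<inter> X a" using agree[OF F2] F12 by blast
  have dis2: "\<forall>b\<in>S. F2 \<inter> X b \<noteq> F1 \<inter> X b" using noii F2 a unfolding S_def by blast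
  have disagree: "E = F2" if E: "E \<in> A" and ne: "\<exists>a\<in>S. E \<inter> X a \<noteq> F1 \<inter> X a" for E
  proof -
    have dE: "\<forall>b\<in>S. E \<inter> X b \<noteq> F1 \<inter> X b" using noii E ne unfolding S_def by blast
    show ?thesis
    proof (rule eq_parts)
      show "E \<subseteq> {1..k*n}" using E AH H_sub by blast
      show "F2 \<subseteq> {1..k*n}" using H_sub[OF F2H] .
      fix i assume i: "i \<in> {1..k}"
      show "E \<inter> X i = F2 \<inter> X i"
      proof (cases "i \<in> S")
        case True
        obtain e where e: "E \<inter> X i = {e}" using el[OF E True] by blast
        obtain f2 where f2: "F2 \<inter> X i = {f2}" using el[OF F2 True] by blast
        obtain f1 where f1: "F1 \<inter> X i = {f1}" using el[OF F1 True] by blast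
        have "e \<noteq> f1" using dE True e f1 by auto
        moreover have "f2 \<noteq> f1" using dis2 True f2 f1 by auto
        moreover have "e \<in> X i" "f2 \<in> X i" "f1 \<in> X i" using e f2 f1 by auto
        ultimately have "e = f2" using n2_eq[OF n2 i] by blast
        then show ?thesis using e f2 by simp
      next
        case False then show ?thesis using outS[OF E i False] outS[OF F2 i False] by simp
      qed
    qed
  qed
  have Asub: "A \<subseteq> {F1, F2}" using agree disagree by blast
  have cA: "card A \<le> 2"
  proof -
    have "card A \<le> card {F1, F2}" using Asub by (intro card_mono) auto
    also have "\<dots> \<le> 2" by (simp add: card_insert_if)
    finally show ?thesis .
  qed
  have F12d: "F1 \<inter> F2 = {}"
  proof (rule ccontr)
    assume "F1 \<inter> F2 \<noteq> {}"
    then obtain x where x: "x \<in> F1" "x \<in> F2" by blast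
    obtain h where h: "h \<in> {1..k}" "x \<in> X h" using part_ex H_sub[OF F1H] x(1) by blast
    have e1: "F1 \<inter> X h = {x}" using single_eq[OF F1H h(1) x(1) h(2)] .
    have e2: "F2 \<inter> X h = {x}" using single_eq[OF F2H h(1) x(2) h(2)] .
    have "h \<in> S" using inS[OF F1 h(1) x(1) h(2)] .
    then have "F2 \<inter> X h \<noteq> F1 \<inter> X h" using dis2 by blast
    then show False using e1 e2 by simp
  qed
  obtain W where W: "W \<in> H q" "t \<le> card (W \<inter> F1)" "W \<inter> F2 = {}"
  proof (cases "q \<le> p")
    case True
    obtain W where W: "W \<in> H q" "W \<subseteq> F1" using restr[OF F1H True] by blast
    have "W \<inter> F1 = W" using W by blast
    then have "t \<le> card (W \<inter> F1)" using H_card[OF W(1)] tq by simp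
    moreover have "W \<inter> F2 = {}" using W F12d by blast
    ultimately show ?thesis using that W by blast
  next
    case False
    obtain W where W: "W \<in> H q" "F1 \<subseteq> W" using ext[OF F1H _ qk] False by fastforce
    have "W \<inter> F1 = F1" using W by blast
    then have "t \<le> card (W \<inter> F1)" using H_card[OF F1H] tp by simp
    moreover have "W \<inter> F2 = {}"
    proof (rule ccontr)
      assume "W \<inter> F2 \<noteq> {}"
      then obtain x where x: "x \<in> W" "x \<in> F2" by blast
      obtain h where h: "h \<in> {1..k}" "x \<in> X h" using part_ex H_sub[OF F2H] x(2) by blast
      have hS: "h \<in> S" using inS[OF F2 h(1) x(2) h(2)] .
      obtain f where f: "F1 \<inter> X h = {f}" using el[OF F1 hS] by blast
      have Wh: "W \<inter> X h = {x}" using single_eq[OF W(1) h(1) x(1) h(2)] .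
      have "f = x" using sing_eq[OF Wh, of f] f W(2) by blast
      then show False using f x(2) F12d by blast
    qed
    ultimately show ?thesis using that W by blast
  qed
  have WN: "W \<in> N t q F1" unfolding N_def using W by (simp add: Int_commute)
  have WB: "W \<notin> B"
  proof
    assume "W \<in> B"
    then have "t \<le> card (F2 \<inter> W)" using cr[OF F2] by blast
    then show False using W(3) t1 by (simp add: Int_commute)
  qed
  have BN: "B \<subseteq> N t q F1 - {W}" unfolding N_def using BH cr[OF F1] WB by (auto simp: Int_commute)
  have "card B \<le> card (N t q F1 - {W})" using BN N_fin by (intro card_mono) auto
  also have "\<dots> = card (N t q F1) - 1" using WN by simp
  finally have "card B \<le> card (N t q F1) - 1" .
  moreover have "1 \<le> card (N t q F1)" using WN N_fin by (metis One_nat_def Suc_leI card_gt_0_iff empty_iff)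
  ultimately show ?thesis using cA by linarith
qed

end

context PT
begin

lemma atom:
  assumes AH: "A \<subseteq> H p" and BH: "B \<subseteq> H q" and Bne: "B \<noteq> {}"
    and cr: "\<And>F G. F \<in> A \<Longrightarrow> G \<in> B \<Longrightarrow> t \<le> card (F \<inter> G)"
    and blkA: "blk A" and F1: "F1 \<in> A"
    and t1: "1 \<le> t" and tp: "t \<le> p" and tq: "t \<le> q" and pk: "p \<le> k" and qk: "q \<le> k"
  shows "card A + card B \<le> 1 + card (N t q F1)"
proof -
  have finA: "finite A" using AH H_finite finite_subset by blast
  have BN: "B \<subseteq> N t q F1" unfolding N_def using BH cr[OF F1] by (auto simp: Int_commute)
  show ?thesis
  proof (cases "A = {F1}")
    case True
    have "card B \<le> card (N t q F1)" using BN N_fin by (intro card_mono) auto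
    then show ?thesis using True by simp
  next
    case False
    then obtain F2 where F2: "F2 \<in> A" "F2 \<noteq> F1" using F1 by blast
    obtain G0 where G0: "G0 \<in> B" using Bne by blast
    have G0H: "G0 \<in> H q" using G0 BH by blast
    have crG: "\<And>E. E \<in> A \<Longrightarrow> t \<le> card (E \<inter> G0)" using cr G0 by blast
    have sameS: "E2 \<inter> X i = {}" if E1: "E1 \<in> A" and E2: "E2 \<in> A" and i: "i \<in> {1..k}" and e1: "E1 \<inter> X i = {}" for E1 E2 i
    proof (rule ccontr)
      assume ne: "E2 \<inter> X i \<noteq> {}"
      have op1: "(E - {u}) \<union> {u'} \<in> A" if "E \<in> A" "E \<inter> X i = {u}" "u' \<in> X i" for E u u'
        using op1_caseI[OF AH blkA i E1 e1 that] .
      show False using lemX[OF AH blkA i op1 E2 ne G0H crG t1] .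
    qed
    have sameS': "\<forall>E1\<in>A. \<forall>E2\<in>A. \<forall>i\<in>{1..k}. E1 \<inter> X i = {} \<longrightarrow> E2 \<inter> X i = {}"
      using sameS by blast
    have F1H: "F1 \<in> H p" and F2H: "F2 \<in> H p" using F1 F2 AH by auto
    show ?thesis
    proof (cases "n \<ge> 3")
      case True
      have "\<not> F1 \<subseteq> F2"
      proof
        assume "F1 \<subseteq> F2"
        then have "F1 = F2" using card_subset_eq[OF H_fin[OF F2H]] H_card[OF F2H] H_card[OF F1H] by metis
        then show False using F2 by simp
      qed
      then obtain x where x: "x \<in> F1" "x \<notin> F2" by blast
      obtain i where i: "i \<in> {1..k}" "x \<in> X i" using part_ex H_sub[OF F1H] x(1) by blast
      have Fx: "F1 \<inter> X i = {x}" using single_eq[OF F1H i(1) x(1) i(2)] .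
      have "F2 \<inter> X i \<noteq> {}"
      proof
        assume "F2 \<inter> X i = {}"
        then have "F1 \<inter> X i = {}" using sameS[OF F2(1) F1 i(1)] by blast
        then show False using Fx by simp
      qed
      then obtain y where y: "F2 \<inter> X i = {y}" using single[OF F2H i(1)] by blast
      have xy: "x \<noteq> y" using y x(2) by blast
      have op1: "(E - {u}) \<union> {u'} \<in> A" if "E \<in> A" "E \<inter> X i = {u}" "u' \<in> X i" for E u u'
        using op1_caseII[OF AH blkA True i(1) F1 Fx F2(1) y xy that] .
      have "F1 \<inter> X i \<noteq> {}" using Fx by simp
      then show ?thesis using lemX[OF AH blkA i(1) op1 F1 _ G0H crG t1] by blast
    next
      case False
      then have n2: "n = 2" using n2 by simp
      show ?thesis
      proof (cases "\<exists>E0\<in>A. \<exists>a0\<in>supp F1. \<exists>b0\<in>supp F1. E0 \<inter> X a0 \<noteq> F1 \<inter> X a0 \<and> E0 \<inter> X b0 = F1 \<inter> X b0")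
        case True
        then obtain E0 a0 b0 where E0: "E0 \<in> A" "a0 \<in> supp F1" "b0 \<in> supp F1"
          "E0 \<inter> X a0 \<noteq> F1 \<inter> X a0" "E0 \<inter> X b0 = F1 \<inter> X b0" by blast
        show ?thesis
          apply (rule case_ii[OF AH BH _ blkA F1 t1 qk _ n2 G0 E0])
           apply (rule cr; assumption)
          apply (rule sameS; assumption)
          done
      next
        case False
        then have noii: "\<forall>E\<in>A. \<forall>a\<in>supp F1. \<forall>b\<in>supp F1. E \<inter> X a \<noteq> F1 \<inter> X a \<longrightarrow> E \<inter> X b \<noteq> F1 \<inter> X b"
          by blast
        show ?thesis using case_i[OF AH BH cr F1 F2 t1 tp tq qk sameS' n2 noii] .
      qed
    qed
  qed
qed

lemma vmin: "i \<in> {1..k} \<Longrightarrow> Min (X i) \<in> X i"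
  by (rule Min_in[OF finX X_ne])

lemma V_int: assumes pk: "p \<le> k" and i: "i \<in> {1..k}"
  shows "Vset X p \<inter> X i = (if i \<le> p then {Min (X i)} else {})"
proof -
  have "Vset X p \<inter> X i \<subseteq> (if i \<le> p then {Min (X i)} else {})"
  proof
    fix z assume z: "z \<in> Vset X p \<inter> X i"
    then obtain j where j: "j \<in> {1..p}" "z = Min (X j)" unfolding Vset_def by blast
    have jk: "j \<in> {1..k}" using j pk by auto
    have "z \<in> X j" using vmin[OF jk] j by simp
    then have "j = i" using part_uniq[OF _ _ jk i] z by blast
    then show "z \<in> (if i \<le> p then {Min (X i)} else {})" using j by auto
  qed
  moreover have "(if i \<le> p then {Min (X i)} else {}) \<subseteq> Vset X p \<inter> X i"
  proof (cases "i \<le> p")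
    case True
    then have "i \<in> {1..p}" using i by simp
    then have "Min (X i) \<in> Vset X p" unfolding Vset_def by (rule imageI)
    then show ?thesis using True vmin[OF i] by simp
  qed simp
  ultimately show ?thesis by blast
qed

lemma V_H: assumes pk: "p \<le> k" shows "Vset X p \<in> H p"
proof -
  have sub: "Vset X p \<subseteq> {1..k*n}"
  proof
    fix z assume "z \<in> Vset X p"
    then obtain j where j: "j \<in> {1..p}" "z = Min (X j)" unfolding Vset_def by blast
    have jk: "j \<in> {1..k}" using j pk by auto
    show "z \<in> {1..k*n}" using vmin[OF jk] Xsub[OF jk] j(2) by blast
  qed
  have inj: "inj_on (\<lambda>i. Min (X i)) {1..p}"
  proof (rule inj_onI)
    fix i j assume i: "i \<in> {1..p}" and j: "j \<in> {1..p}" and e: "Min (X i) = Min (X j)"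
    have ik: "i \<in> {1..k}" and jk: "j \<in> {1..k}" using i j pk by auto
    show "i = j" using part_uniq[OF vmin[OF ik] _ ik jk] vmin[OF jk] e by simp
  qed
  have "card (Vset X p) = p" unfolding Vset_def using card_image[OF inj] by simp
  moreover have "card (Vset X p \<inter> X i) \<le> 1" if i: "i \<in> {1..k}" for i
    using V_int[OF pk i] by simp
  ultimately show ?thesis unfolding Hfam_def using sub by blast
qed

lemma trans_N: assumes F: "F \<in> H p" and pk: "p \<le> k"
  shows "card (N t q F) = card (N t q (Vset X p))"
proof -
  define V where "V = Vset X p"
  have VH: "V \<in> H p" unfolding V_def using V_H[OF pk] .
  have "\<forall>F. F \<in> H p \<longrightarrow> card (F - V) = m \<longrightarrow> card (N t q F) = card (N t q V)" for m
  proof (induction m)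
    case 0
    show ?case
    proof (intro allI impI)
      fix F assume F: "F \<in> H p" and c: "card (F - V) = 0"
      have "F - V = {}" using c H_fin[OF F] by simp
      then have "F \<subseteq> V" by blast
      then have "F = V" using card_subset_eq[OF H_fin[OF VH]] H_card[OF F] H_card[OF VH] by metis
      then show "card (N t q F) = card (N t q V)" by simp
    qed
  next
    case (Suc m)
    show ?case
    proof (intro allI impI)
      fix F assume F: "F \<in> H p" and c: "card (F - V) = Suc m"
      have "F - V \<noteq> {}"
      proof
        assume e: "F - V = {}"
        have "card (F - V) = 0" unfolding e by simp
        then show False using c by simp
      qed
      then obtain x where x: "x \<in> F" "x \<notin> V" by blast
      obtain h where h: "h \<in> {1..k}" "x \<in> X h" using part_ex H_sub[OF F] x(1) by blast
      have Fh: "F \<inter> X h = {x}" using single_eq[OF F h(1) x(1) h(2)] .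
      obtain \<sigma> v where s: "aut \<sigma>" "\<sigma> ` F = (F - {x}) \<union> {v}" "v \<in> V" "v \<notin> F"
      proof (cases "h \<le> p")
        case True
        define v where "v = Min (X h)"
        have vX: "v \<in> X h" unfolding v_def using vmin[OF h(1)] .
        have vV: "v \<in> V" unfolding V_def v_def Vset_def using True h(1) by auto
        have vF: "v \<notin> F" using Fh vX x(2) vV by auto
        have "tr x v ` F = (F - {x}) \<union> {v}" using tr_move[OF x(1) vF] .
        then show ?thesis using that[OF tr_aut[OF h(1) h(2) vX]] vV vF by blast
      next
        case False
        have "\<exists>i\<in>{1..p}. F \<inter> X i = {}"
        proof (rule ccontr)
          assume "\<not> (\<exists>i\<in>{1..p}. F \<inter> X i = {})"
          then have "insert h {1..p} \<subseteq> supp F" unfolding supp_def using pk h Fh by auto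
          then have "card (insert h {1..p}) \<le> card (supp F)" by (intro card_mono) (auto intro: finite_subset[OF supp_sub])
          then show False using card_supp[OF F] False by simp
        qed
        then obtain i where i: "i \<in> {1..p}" "F \<inter> X i = {}" by blast
        have ik: "i \<in> {1..k}" using i pk by auto
        have hi: "h \<noteq> i" using False i by auto
        define v where "v = Min (X i)"
        have vX: "v \<in> X i" unfolding v_def using vmin[OF ik] .
        have vV: "v \<in> V" unfolding V_def v_def Vset_def using i by auto
        have vF: "v \<notin> F" using i vX by auto
        obtain \<tau> where t: "aut \<tau>" "\<tau> x = v" "\<forall>z. z \<notin> X h \<union> X i \<longrightarrow> \<tau> z = z"
          using pswap[OF h(1) ik hi h(2) vX] by blast
        have "\<tau> ` (F - {x}) = id ` (F - {x})"
          by (rule image_cong) (use t(3) Fh i(2) in auto)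
        then have tF: "\<tau> ` (F - {x}) = F - {x}" by simp
        have "F = insert x (F - {x})" using x(1) by blast
        then have "\<tau> ` F = insert (\<tau> x) (\<tau> ` (F - {x}))" by (metis image_insert)
        then have "\<tau> ` F = (F - {x}) \<union> {v}" using tF t(2) by simp
        then show ?thesis using that[OF t(1)] vV vF by blast
      qed
      have sF: "\<sigma> ` F \<in> H p" using aut_H[OF s(1) F] .
      have "(\<sigma> ` F) - V = (F - V) - {x}" using s(2) s(3) by auto
      then have "card ((\<sigma> ` F) - V) = m" using c x H_fin[OF F] by simp
      then have "card (N t q (\<sigma> ` F)) = card (N t q V)" using Suc.IH sF by blast
      then show "card (N t q F) = card (N t q V)" using aut_N[OF s(1)] by simp
    qed
  qed
  then show ?thesis using F unfolding V_def by blast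
qed

end

context PT
begin

lemma mainT:
  assumes t1: "1 \<le> t" and tp: "t \<le> p" and tq: "t \<le> q" and pk: "p \<le> k" and qk: "q \<le> k"
    and okAB: "ok p q t A B"
  shows "card A + card B \<le> 1 + max (card (N t q (Vset X p))) (card (N t p (Vset X q)))"
proof -
  define P where "P = (\<lambda>x. ok p q t (fst x) (snd x))"
  define f where "f = (\<lambda>x::nat set set \<times> nat set set. card (fst x) + card (snd x))"
  have bound: "\<forall>y. P y \<longrightarrow> f y < card (H p) + card (H q) + 1"
  proof (intro allI impI)
    fix y assume "P y"
    then have "fst y \<subseteq> H p" "snd y \<subseteq> H q" unfolding P_def ok_def by auto
    then have "card (fst y) \<le> card (H p)" "card (snd y) \<le> card (H q)" using H_finite by (auto intro: card_mono)
    then show "f y < card (H p) + card (H q) + 1" unfolding f_def by simp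
  qed
  have "P (A, B)" unfolding P_def using okAB by simp
  then obtain x0 where x0: "P x0" and max0: "\<And>y. P y \<Longrightarrow> f y \<le> f x0"
    using ex_has_greatest_nat[of P "(A, B)" f, OF _ bound] by blast
  define P' where "P' = (\<lambda>x. P x \<and> f x = f x0)"
  have "P' x0" unfolding P'_def using x0 by simp
  then obtain x1 where x1: "P' x1" and min1: "\<And>y. P' y \<Longrightarrow> min (card (fst x1)) (card (snd x1)) \<le> min (card (fst y)) (card (snd y))"
    using ex_has_least_nat[of P' x0 "\<lambda>x. min (card (fst x)) (card (snd x))"] by blast
  obtain A1 B1 where AB1: "x1 = (A1, B1)" by (cases x1)
  have ok1: "ok p q t A1 B1" using x1 AB1 unfolding P'_def P_def by simp
  have M: "card A1 + card B1 = f x0" using x1 AB1 unfolding P'_def f_def by simp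
  have maxi: "card A' + card B' \<le> card A1 + card B1" if "ok p q t A' B'" for A' B'
    using max0[of "(A', B')"] that M unfolding P_def f_def by simp
  have mini: "min (card A1) (card B1) \<le> min (card A') (card B')"
    if "ok p q t A' B'" "card A' + card B' = card A1 + card B1" for A' B'
    using min1[of "(A', B')"] that M AB1 unfolding P'_def P_def f_def by simp
  have "card A + card B \<le> card A1 + card B1" using maxi[OF okAB] .
  moreover have "card A1 + card B1 \<le> 1 + max (card (N t q (Vset X p))) (card (N t p (Vset X q)))"
  proof (cases "card A1 \<le> card B1")
    case True
    have mini': "card A1 \<le> card A' \<and> card A1 \<le> card B'"
      if "ok p q t A' B'" "card A' + card B' = card A1 + card B1" for A' B'
      using mini[OF that] True by simp
    have blkA: "blk A1" unfolding blk_def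
    proof (intro allI impI)
      fix \<sigma> K E assume "aut \<sigma>" "K \<in> A1" "\<sigma> ` K = K" "E \<in> A1"
      then show "\<sigma> ` E \<in> A1" using block[OF ok1 maxi mini'] by blast
    qed
    have AH: "A1 \<subseteq> H p" and BH: "B1 \<subseteq> H q" and Ane: "A1 \<noteq> {}" and Bne: "B1 \<noteq> {}"
      and cr: "\<And>F G. F \<in> A1 \<Longrightarrow> G \<in> B1 \<Longrightarrow> t \<le> card (F \<inter> G)"
      using ok1 unfolding ok_def cross_t_intersecting_def by auto
    obtain F1 where F1: "F1 \<in> A1" using Ane by blast
    have "card A1 + card B1 \<le> 1 + card (N t q F1)"
      apply (rule atom[OF AH BH Bne _ blkA F1 t1 tp tq pk qk])
      apply (rule cr; assumption)
      done
    also have "card (N t q F1) = card (N t q (Vset X p))" using trans_N[of F1 p t q] F1 AH pk by blast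
    finally show ?thesis by simp
  next
    case False
    have ok2: "ok q p t B1 A1" using ok_swap[OF ok1] .
    have maxi2: "card B' + card A' \<le> card B1 + card A1" if "ok q p t B' A'" for A' B'
      using maxi[OF ok_swap[OF that]] by simp
    have mini2: "card B1 \<le> card B' \<and> card B1 \<le> card A'"
      if "ok q p t B' A'" "card B' + card A' = card B1 + card A1" for A' B'
      using mini[OF ok_swap[OF that(1)]] that(2) False by simp
    have blkB: "blk B1" unfolding blk_def
    proof (intro allI impI)
      fix \<sigma> K E assume "aut \<sigma>" "K \<in> B1" "\<sigma> ` K = K" "E \<in> B1"
      then show "\<sigma> ` E \<in> B1" using block[OF ok2 maxi2 mini2] by blast
    qed
    have AH: "B1 \<subseteq> H q" and BH: "A1 \<subseteq> H p" and Ane: "B1 \<noteq> {}" and Bne: "A1 \<noteq> {}"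
      and cr: "\<And>F G. F \<in> B1 \<Longrightarrow> G \<in> A1 \<Longrightarrow> t \<le> card (F \<inter> G)"
      using ok2 unfolding ok_def cross_t_intersecting_def by auto
    obtain G1 where G1: "G1 \<in> B1" using Ane by blast
    have "card B1 + card A1 \<le> 1 + card (N t p G1)"
      apply (rule atom[OF AH BH Bne _ blkB G1 t1 tq tp qk pk])
      apply (rule cr; assumption)
      done
    also have "card (N t p G1) = card (N t p (Vset X q))" using trans_N[of G1 q t p] G1 AH qk by blast
    finally show ?thesis by simp
  qed
  ultimately show ?thesis by linarith
qed

end

theorem theorem1p6:
  fixes n k l l' t :: nat and X :: "nat \<Rightarrow> nat set"
    and \<F> \<G> :: "nat set set"
  assumes "n \<ge> 2" and "k \<ge> l" and "l \<ge> l'" and "l' \<ge> t" and "t \<ge> 1"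
    and "(\<Union>i\<in>{1..k}. X i) = {1..k*n}"
    and "\<forall>i\<in>{1..k}. \<forall>j\<in>{1..k}. i \<noteq> j \<longrightarrow> X i \<inter> X j = {}"
    and "\<forall>i\<in>{1..k}. card (X i) = n"
    and "\<F> \<subseteq> Hfam X n k l" and "\<G> \<subseteq> Hfam X n k l'"
    and "\<F> \<noteq> {}" and "\<G> \<noteq> {}"
    and "cross_t_intersecting t \<F> \<G>"
  shows "card \<F> + card \<G> \<le>
    Max ({card {F \<in> Hfam X n k l. t \<le> card (F \<inter> Vset X l')} + card {Vset X l'}}
         \<union> {card {F \<in> Hfam X n k l. Vset X a \<subseteq> F}
             + card {G \<in> Hfam X n k l'. t \<le> card (G \<inter> Vset X a)} | a. a \<in> {l'+1..l}})"
proof -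
  interpret PT X n k using assms(1,6,7,8) by unfold_locales
  have okFG: "ok l l' t \<F> \<G>" unfolding ok_def using assms(9-13) by blast
  have bnd: "card \<F> + card \<G> \<le> 1 + max (card (N t l' (Vset X l))) (card (N t l (Vset X l')))"
    using mainT[OF assms(5) _ assms(4) assms(2) _ okFG] assms(2-5) by simp
  define S1 where "S1 = {card {F \<in> Hfam X n k l. t \<le> card (F \<inter> Vset X l')} + card {Vset X l'}}"
  define S2 where "S2 = {card {F \<in> Hfam X n k l. Vset X a \<subseteq> F}
             + card {G \<in> Hfam X n k l'. t \<le> card (G \<inter> Vset X a)} | a. a \<in> {l'+1..l}}"
  have S2img: "S2 = (\<lambda>a. card {F \<in> Hfam X n k l. Vset X a \<subseteq> F}
             + card {G \<in> Hfam X n k l'. t \<le> card (G \<inter> Vset X a)}) ` {l'+1..l}"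
    unfolding S2_def by blast
  have fin: "finite (S1 \<union> S2)" unfolding S1_def using S2img by simp
  have e1: "1 + card (N t l (Vset X l')) \<in> S1 \<union> S2" unfolding S1_def N_def by simp
  have e2: "1 + card (N t l' (Vset X l)) \<in> S1 \<union> S2"
  proof (cases "l' < l")
    case True
    have VH: "Vset X l \<in> Hfam X n k l" using V_H assms(2) by blast
    have "{F \<in> Hfam X n k l. Vset X l \<subseteq> F} = {Vset X l}"
    proof
      show "{F \<in> Hfam X n k l. Vset X l \<subseteq> F} \<subseteq> {Vset X l}"
      proof
        fix F assume F: "F \<in> {F \<in> Hfam X n k l. Vset X l \<subseteq> F}"
        then have FH: "F \<in> Hfam X n k l" and sub: "Vset X l \<subseteq> F" by auto
        have "Vset X l = F" using card_subset_eq[OF H_fin[OF FH] sub] H_card[OF FH] H_card[OF VH] by simp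
        then show "F \<in> {Vset X l}" by simp
      qed
      show "{Vset X l} \<subseteq> {F \<in> Hfam X n k l. Vset X l \<subseteq> F}" using VH by simp
    qed
    then have eq: "1 + card (N t l' (Vset X l)) = card {F \<in> Hfam X n k l. Vset X l \<subseteq> F} + card {G \<in> Hfam X n k l'. t \<le> card (G \<inter> Vset X l)}"
      unfolding N_def by simp
    have "l \<in> {l'+1..l}" using True by simp
    then have "card {F \<in> Hfam X n k l. Vset X l \<subseteq> F} + card {G \<in> Hfam X n k l'. t \<le> card (G \<inter> Vset X l)} \<in> S2"
      unfolding S2img by (rule imageI)
    then have "1 + card (N t l' (Vset X l)) \<in> S2" by (subst eq)
    then show ?thesis by blast
  next
    case False
    then have "l' = l" using assms(3) by simp
    then show ?thesis using e1 by simp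
  qed
  have "1 + max (card (N t l' (Vset X l))) (card (N t l (Vset X l'))) \<le> Max (S1 \<union> S2)"
    using Max_ge[OF fin e1] Max_ge[OF fin e2] by simp
  then show ?thesis using bnd unfolding S1_def S2_def by simp
qed

end
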